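(* Let $n\ge1$ and $T\in M_n(\mathcal L_K)$, regarded as an operator on $\mathbb C^n\otimes\ell_2(F_\infty)$. Put $$a(T)=\sup\{\|Tq\|_2: q\in\mathbb C^n\otimes\mathcal L^2_\alpha,\ \|q\|_2\le1\},\qquad b(T)=\sup\{\|T^*(b\otimes\delta_{1})\|_2: b\in\mathbb C^n,\ \|b\|_2\le1\},$$ where $\mathcal L^2_\alpha=\mathrm{span}\{\delta_x:x\in F_\alpha\}$ and $\delta_1$ is the basis vector of the identity element. Then $$\max\{a(T),b(T)\}\le\|T\|\le a(T)+b(T).$$
   Context: Let $F_\infty$ be the free group with free generators split into two infinite families $\alpha_1,\alpha_2,\dots$ and $e_1,e_2,\dots$; $F_\alpha$ is the subgroup generated by the $\alpha_i$, and $K=\bigcup_{j\ge1}e_jF_\alpha$. $\ell_2(F_\infty)$ has orthonormal basis $\{\delta_x\}$, $\lambda(x)\delta_y=\delta_{xy}$, and $\mathcal L_K=\mathrm{span}\{\lambda(x):x\in K\}$ (finite linear combinations). $M_n(\mathcal L_K)=M_n\otimes\mathcal L_K$ acts on $\mathbb C^n\otimes\ell_2(F_\infty)$ and $\|T\|$ is its operator norm. *)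

theory Defs
  imports "HOL-Analysis.Analysis"
begin

(* Free group F_infinity on generators Inl i = alpha_(i+1), Inr j = e_(j+1).
   Elements are reduced words of letters (generator, sign); sign True = positive power. *)
type_synonym letter = "(nat + nat) \<times> bool"
type_synonym word = "letter list"

definition cancels :: "letter \<Rightarrow> letter \<Rightarrow> bool" where
  "cancels a b \<longleftrightarrow> fst a = fst b \<and> snd a \<noteq> snd b"

definition reduced :: "word \<Rightarrow> bool" where
  "reduced w \<longleftrightarrow> successively (\<lambda>a b. \<not> cancels a b) w"

fun push :: "letter \<Rightarrow> word \<Rightarrow> word" where
  "push a [] = [a]"
| "push a (b # w) = (if cancels a b then w else a # b # w)"

definition fmul :: "word \<Rightarrow> word \<Rightarrow> word" where
  "fmul xs ys = foldr push xs ys"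

definition winv :: "word \<Rightarrow> word" where
  "winv w = rev (map (\<lambda>(g, s). (g, \<not> s)) w)"

definition Finf :: "word set" where
  "Finf = {w. reduced w}"

definition Falpha :: "word set" where
  "Falpha = {w. reduced w \<and> (\<forall>a\<in>set w. isl (fst a))}"

definition Kset :: "word set" where
  "Kset = {fmul [(Inr j, True)] u | j u. u \<in> Falpha}"

(* C^n (x) l_2(F_infinity), with n = CARD('n): functions on 'n \<times> F_infinity
   (zero off F_infinity) that are square summable *)
definition ell2 :: "('n \<times> word \<Rightarrow> complex) set" where
  "ell2 = {f. (\<forall>i z. \<not> reduced z \<longrightarrow> f (i, z) = 0) \<and>
              (\<lambda>p. (cmod (f p))\<^sup>2) summable_on UNIV}"

definition l2norm :: "('n \<times> word \<Rightarrow> complex) \<Rightarrow> real" where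
  "l2norm f = sqrt (infsum (\<lambda>p. (cmod (f p))\<^sup>2) UNIV)"

(* An element T = sum_x C x \<otimes> lambda(x) of M_n(C F_infinity) is given by a finitely
   supported coefficient function C :: word \<Rightarrow> n\<times>n matrix. *)
definition in_MnLK :: "(word \<Rightarrow> 'n \<Rightarrow> 'n \<Rightarrow> complex) \<Rightarrow> bool" where
  "in_MnLK C \<longleftrightarrow> finite {x. C x \<noteq> (\<lambda>i j. 0)} \<and> {x. C x \<noteq> (\<lambda>i j. 0)} \<subseteq> Kset"

(* action on C^n (x) l_2: (lambda(x) f)(z) = f(x^-1 z) *)
definition opT :: "(word \<Rightarrow> 'n::finite \<Rightarrow> 'n \<Rightarrow> complex) \<Rightarrow> ('n \<times> word \<Rightarrow> complex)
                    \<Rightarrow> ('n \<times> word \<Rightarrow> complex)" where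
  "opT C f = (\<lambda>(i, z). if reduced z then
      (\<Sum>x\<in>{x. C x \<noteq> (\<lambda>i j. 0)}. \<Sum>j\<in>UNIV. C x i j * f (j, fmul (winv x) z)) else 0)"

definition opnorm :: "(word \<Rightarrow> 'n::finite \<Rightarrow> 'n \<Rightarrow> complex) \<Rightarrow> real" where
  "opnorm C = (SUP f\<in>{f\<in>ell2. l2norm f \<le> 1}. l2norm (opT C f))"

(* adjoint: (sum_x C_x \<otimes> lambda(x))^* = sum_x C_x^* \<otimes> lambda(x^-1) *)
definition adjC :: "(word \<Rightarrow> 'n \<Rightarrow> 'n \<Rightarrow> complex) \<Rightarrow> (word \<Rightarrow> 'n \<Rightarrow> 'n \<Rightarrow> complex)" where
  "adjC C = (\<lambda>x i j. cnj (C (winv x) j i))"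

definition L2alpha :: "('n \<times> word \<Rightarrow> complex) set" where
  "L2alpha = {q. finite {p. q p \<noteq> 0} \<and> (\<forall>i z. q (i, z) \<noteq> 0 \<longrightarrow> z \<in> Falpha)}"

definition vnorm :: "('n::finite \<Rightarrow> complex) \<Rightarrow> real" where
  "vnorm b = sqrt (\<Sum>i\<in>UNIV. (cmod (b i))\<^sup>2)"

definition aT :: "(word \<Rightarrow> 'n::finite \<Rightarrow> 'n \<Rightarrow> complex) \<Rightarrow> real" where
  "aT C = (SUP q\<in>{q\<in>L2alpha. l2norm q \<le> 1}. l2norm (opT C q))"

definition bdelta :: "('n \<Rightarrow> complex) \<Rightarrow> ('n \<times> word \<Rightarrow> complex)" where
  "bdelta b = (\<lambda>(i, z). if z = [] then b i else 0)"

definition bT :: "(word \<Rightarrow> 'n::finite \<Rightarrow> 'n \<Rightarrow> complex) \<Rightarrow> real" where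
  "bT C = (SUP b\<in>{b. vnorm b \<le> 1}. l2norm (opT (adjC C) (bdelta b)))"

end

theory Submission
  imports Defs
begin

definition linv :: "letter \<Rightarrow> letter" where
  "linv a = (fst a, \<not> snd a)"

lemma linv_linv[simp]: "linv (linv a) = a"
  by (simp add: linv_def)

lemma winv_alt: "winv w = rev (map linv w)"
proof -
  have "(\<lambda>(g, s). (g, \<not> s)) = linv" by (auto simp: linv_def fun_eq_iff)
  then show ?thesis by (simp add: winv_def)
qed

lemma winv_Nil[simp]: "winv [] = []" by (simp add: winv_alt)
lemma winv_Cons: "winv (a # x) = winv x @ [linv a]" by (simp add: winv_alt)
lemma winv_append: "winv (x @ y) = winv y @ winv x" by (simp add: winv_alt)
lemma winv_winv[simp]: "winv (winv x) = x" by (simp add: winv_alt rev_map comp_def)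
lemma winv_inj: "winv x = winv y \<Longrightarrow> x = y" by (metis winv_winv)

lemma cancels_linv: "cancels a b \<longleftrightarrow> b = linv a"
  by (cases a; cases b) (auto simp: cancels_def linv_def)

lemma reduced_Nil[simp]: "reduced []" by (simp add: reduced_def)
lemma reduced_single[simp]: "reduced [a]" by (simp add: reduced_def)
lemma reduced_Cons_Cons[simp]: "reduced (a # b # w) \<longleftrightarrow> \<not> cancels a b \<and> reduced (b # w)"
  by (simp add: reduced_def)
lemma reduced_tl: "reduced (a # w) \<Longrightarrow> reduced w"
  by (cases w) auto
lemma reduced_append: "reduced (x @ y) \<Longrightarrow> reduced x \<and> reduced y"
  by (simp add: reduced_def successively_append_iff)

lemma push_reduced: "reduced w \<Longrightarrow> reduced (push a w)"
  by (cases w) (auto dest: reduced_tl)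

lemma fmul_Nil[simp]: "fmul [] y = y" by (simp add: fmul_def)
lemma fmul_Cons: "fmul (a # x) y = push a (fmul x y)" by (simp add: fmul_def)
lemma fmul_append: "fmul (x @ x') y = fmul x (fmul x' y)" by (simp add: fmul_def)

lemma fmul_reduced: "reduced y \<Longrightarrow> reduced (fmul x y)"
  by (induction x) (auto simp: fmul_Cons push_reduced)

lemma push_linv: "reduced w \<Longrightarrow> push (linv a) (push a w) = w"
proof (cases w)
  case Nil then show ?thesis by (simp add: cancels_linv)
next
  case (Cons b w')
  assume r: "reduced w"
  show ?thesis
  proof (cases "cancels a b")
    case True
    then have b: "b = linv a" by (simp add: cancels_linv)
    show ?thesis
    proof (cases w')
      case Nil then show ?thesis using Cons True b by simp
    next
      case (Cons c w'')
      then have "\<not> cancels b c" using r \<open>w = b # w'\<close> by simp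
      then have "\<not> cancels (linv a) c" using b by simp
      then show ?thesis using \<open>w = b # w'\<close> Cons True b by simp
    qed
  next
    case False
    then show ?thesis using Cons by (simp add: cancels_linv)
  qed
qed

lemma fmul_inv_left: "reduced w \<Longrightarrow> fmul (winv x) (fmul x w) = w"
proof (induction x arbitrary: w)
  case Nil then show ?case by simp
next
  case (Cons a x)
  have "fmul (winv (a # x)) (fmul (a # x) w) = fmul (winv x) (push (linv a) (push a (fmul x w)))"
    by (simp add: winv_Cons fmul_append fmul_Cons)
  also have "\<dots> = fmul (winv x) (fmul x w)"
    using Cons.prems by (simp add: push_linv fmul_reduced)
  also have "\<dots> = w" using Cons by simp
  finally show ?case .
qed

lemma fmul_inv_right: "reduced z \<Longrightarrow> fmul x (fmul (winv x) z) = z"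
  using fmul_inv_left[of z "winv x"] by simp

lemma reduced_winv: "reduced x \<Longrightarrow> reduced (winv x)"
  unfolding reduced_def winv_alt successively_rev successively_map
  by (erule successively_mono) (auto simp: cancels_def linv_def)

lemma fmul_append_red: "reduced (a @ b) \<Longrightarrow> fmul a b = a @ b"
proof (induction a)
  case Nil then show ?case by simp
next
  case (Cons c a)
  then have r: "reduced (a @ b)" by (auto dest: reduced_tl)
  then have IH: "fmul a b = a @ b" using Cons.IH by blast
  have e: "fmul (c # a) b = push c (a @ b)" by (simp only: fmul_Cons IH)
  show ?case
  proof (cases "a @ b")
    case Nil then show ?thesis using e by simp
  next
    case (Cons d r')
    have "reduced (c # d # r')" using Cons.prems Cons by simp
    then have "\<not> cancels c d" by simp
    then show ?thesis using e Cons by simp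
  qed
qed

lemma fmul_Nil_right: "reduced x \<Longrightarrow> fmul x [] = x"
  using fmul_append_red[of x "[]"] by simp

lemma fmul_winv_eq_Nil: "reduced x \<Longrightarrow> reduced z \<Longrightarrow> fmul (winv x) z = [] \<Longrightarrow> z = x"
proof -
  assume a: "reduced x" "reduced z" "fmul (winv x) z = []"
  have "z = fmul x (fmul (winv x) z)" using fmul_inv_right[OF a(2)] by simp
  also have "\<dots> = fmul x []" using a(3) by simp
  also have "\<dots> = x" using fmul_Nil_right[OF a(1)] .
  finally show ?thesis .
qed

lemma fmul_winv_self: "reduced x \<Longrightarrow> fmul (winv x) x = []"
proof -
  assume a: "reduced x"
  have "fmul (winv x) x = fmul (winv x) (fmul x [])" using fmul_Nil_right[OF a] by simp
  also have "\<dots> = []" using fmul_inv_left[of "[]" x] by simp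
  finally show ?thesis .
qed

definition alpha :: "word \<Rightarrow> bool" where
  "alpha w \<longleftrightarrow> (\<forall>a\<in>set w. isl (fst a))"

lemma alpha_simps[simp]: "alpha []" "alpha (a # w) \<longleftrightarrow> isl (fst a) \<and> alpha w"
  "alpha (x @ y) \<longleftrightarrow> alpha x \<and> alpha y"
  by (auto simp: alpha_def)

lemma Falpha_iff: "w \<in> Falpha \<longleftrightarrow> reduced w \<and> alpha w"
  by (simp add: Falpha_def alpha_def)

lemma push_alpha: "isl (fst a) \<Longrightarrow> alpha w \<Longrightarrow> alpha (push a w)"
  by (cases w) auto

lemma fmul_alpha: "alpha x \<Longrightarrow> alpha y \<Longrightarrow> alpha (fmul x y)"
  by (induction x) (auto simp: fmul_Cons push_alpha)

lemma winv_alpha: "alpha x \<Longrightarrow> alpha (winv x)"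
  by (induction x) (auto simp: winv_Cons linv_def)

lemma fmul_alpha_append:
  assumes "alpha v" "alpha u" "t = [] \<or> \<not> isl (fst (hd t))"
  shows "fmul v (u @ t) = fmul v u @ t"
  using assms(1)
proof (induction v)
  case Nil then show ?case by simp
next
  case (Cons a v)
  then have IH: "fmul v (u @ t) = fmul v u @ t" and ia: "isl (fst a)" by auto
  have fa: "alpha (fmul v u)" using Cons.prems assms(2) fmul_alpha by auto
  show ?case
  proof (cases "fmul v u")
    case Nil
    have "push a t = a # t"
      using assms(3) ia by (cases t) (auto simp: cancels_def)
    then show ?thesis using Nil IH by (simp add: fmul_Cons)
  next
    case (Cons b r)
    then show ?thesis using IH by (simp add: fmul_Cons)
  qed
qed

lemma Kset_cases:
  assumes "x \<in> Kset"
  obtains j v where "x = (Inr j, True) # v" "v \<in> Falpha"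
proof -
  obtain j u where x: "x = fmul [(Inr j, True)] u" "u \<in> Falpha"
    using assms by (auto simp: Kset_def)
  have "fmul [(Inr j, True)] u = (Inr j, True) # u"
    using x(2) by (cases u) (auto simp: fmul_def cancels_def Falpha_iff)
  then show ?thesis using that x by auto
qed

lemma Kset_reduced: "x \<in> Kset \<Longrightarrow> reduced x"
  by (erule Kset_cases) (auto simp: Falpha_iff, case_tac v, auto simp: cancels_def)

lemma CS_complex:
  fixes u v :: "'a \<Rightarrow> complex"
  shows "(cmod (\<Sum>a\<in>A. u a * v a))\<^sup>2 \<le> (\<Sum>a\<in>A. (cmod (u a))\<^sup>2) * (\<Sum>a\<in>A. (cmod (v a))\<^sup>2)"
proof -
  have "cmod (\<Sum>a\<in>A. u a * v a) \<le> (\<Sum>a\<in>A. \<bar>cmod (u a)\<bar> * \<bar>cmod (v a)\<bar>)"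
    by (rule order_trans[OF norm_sum]) (simp add: norm_mult)
  also have "\<dots> \<le> L2_set (\<lambda>a. cmod (u a)) A * L2_set (\<lambda>a. cmod (v a)) A"
    by (rule L2_set_mult_ineq)
  finally have 1: "cmod (\<Sum>a\<in>A. u a * v a) \<le> L2_set (\<lambda>a. cmod (u a)) A * L2_set (\<lambda>a. cmod (v a)) A" .
  have "(cmod (\<Sum>a\<in>A. u a * v a))\<^sup>2 \<le> (L2_set (\<lambda>a. cmod (u a)) A * L2_set (\<lambda>a. cmod (v a)) A)\<^sup>2"
    using 1 by (simp add: power_mono)
  also have "\<dots> = (\<Sum>a\<in>A. (cmod (u a))\<^sup>2) * (\<Sum>a\<in>A. (cmod (v a))\<^sup>2)"
    by (simp add: L2_set_def power_mult_distrib sum_nonneg)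
  finally show ?thesis .
qed

definition suppC :: "(word \<Rightarrow> 'n \<Rightarrow> 'n \<Rightarrow> complex) \<Rightarrow> word set" where
  "suppC C = {x. C x \<noteq> (\<lambda>i j. 0)}"

definition nsq :: "('n \<times> word \<Rightarrow> complex) \<Rightarrow> real" where
  "nsq f = infsum (\<lambda>p. (cmod (f p))\<^sup>2) UNIV"

lemma l2norm_nsq: "l2norm f = sqrt (nsq f)"
  by (simp add: l2norm_def nsq_def)

definition fs :: "word set \<Rightarrow> ('n \<times> word \<Rightarrow> complex) \<Rightarrow> bool" where
  "fs W f \<longleftrightarrow> finite W \<and> (\<forall>w\<in>W. reduced w) \<and> (\<forall>j w. w \<notin> W \<longrightarrow> f (j, w) = 0)"

definition hW :: "('n::finite \<times> word \<Rightarrow> complex) \<Rightarrow> word \<Rightarrow> real" where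
  "hW f w = (\<Sum>j\<in>UNIV. (cmod (f (j, w)))\<^sup>2)"

lemma hW_nonneg: "0 \<le> hW f w"
  by (simp add: hW_def sum_nonneg)

lemma sum_prod_swap:
  fixes g :: "'n::finite \<times> word \<Rightarrow> real"
  assumes "finite W"
  shows "(\<Sum>p\<in>UNIV \<times> W. g p) = (\<Sum>w\<in>W. \<Sum>j\<in>UNIV. g (j, w))"
proof -
  have "(\<Sum>p\<in>UNIV \<times> W. g p) = (\<Sum>j\<in>UNIV. \<Sum>w\<in>W. g (j, w))"
    by (simp add: sum.cartesian_product)
  also have "\<dots> = (\<Sum>w\<in>W. \<Sum>j\<in>UNIV. g (j, w))" by (rule sum.swap)
  finally show ?thesis .
qed

lemma fs_summable:
  fixes f :: "'n::finite \<times> word \<Rightarrow> complex"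
  assumes "fs W f"
  shows "(\<lambda>p. (cmod (f p))\<^sup>2) summable_on UNIV"
proof -
  have fin: "finite (UNIV \<times> W :: ('n \<times> word) set)" using assms by (simp add: fs_def)
  have "(\<lambda>p. (cmod (f p))\<^sup>2) summable_on (UNIV \<times> W)" using fin by simp
  then show ?thesis
    by (rule summable_on_cong_neutral[THEN iffD1, rotated -1]) (use assms in \<open>auto simp: fs_def\<close>)
qed

lemma nsq_fs:
  fixes f :: "'n::finite \<times> word \<Rightarrow> complex"
  assumes "fs W f"
  shows "nsq f = (\<Sum>w\<in>W. hW f w)"
proof -
  have fin: "finite W" using assms by (simp add: fs_def)
  have "nsq f = infsum (\<lambda>p. (cmod (f p))\<^sup>2) (UNIV \<times> W)"
    unfolding nsq_def
    by (rule infsum_cong_neutral) (use assms in \<open>auto simp: fs_def\<close>)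
  also have "\<dots> = (\<Sum>p\<in>UNIV \<times> W. (cmod (f p))\<^sup>2)" using fin by simp
  also have "\<dots> = (\<Sum>w\<in>W. hW f w)" using fin by (simp add: sum_prod_swap hW_def)
  finally show ?thesis .
qed

lemma nsq_nonneg: "0 \<le> nsq f"
  by (simp add: nsq_def infsum_nonneg)

lemma fs_sum_le_nsq:
  fixes f :: "'n::finite \<times> word \<Rightarrow> complex"
  assumes "fs W f" "finite Z"
  shows "(\<Sum>z\<in>Z. hW f z) \<le> nsq f"
proof -
  have "(\<Sum>z\<in>Z. hW f z) = (\<Sum>p\<in>UNIV \<times> Z. (cmod (f p))\<^sup>2)"
    using assms(2) by (simp add: sum_prod_swap hW_def)
  also have "\<dots> \<le> nsq f" unfolding nsq_def
    by (rule finite_sum_le_infsum) (use assms fs_summable in auto)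
  finally show ?thesis .
qed

lemma opT_apply:
  "opT C f (i, z) = (if reduced z then (\<Sum>x\<in>suppC C. \<Sum>j\<in>UNIV. C x i j * f (j, fmul (winv x) z)) else 0)"
  by (simp add: opT_def suppC_def)

lemma inMnLK_D:
  assumes "in_MnLK C"
  shows "finite (suppC C)" "suppC C \<subseteq> Kset"
  using assms by (auto simp: in_MnLK_def suppC_def)

definition Zof :: "word set \<Rightarrow> word set \<Rightarrow> word set" where
  "Zof S W = (\<lambda>(x, w). fmul x w) ` (S \<times> W)"

lemma opT_fs:
  assumes "in_MnLK C" "fs W f"
  shows "fs (Zof (suppC C) W) (opT C f)"
proof -
  have fin: "finite (Zof (suppC C) W)"
    using assms inMnLK_D[OF assms(1)] by (simp add: Zof_def fs_def)
  have red: "\<forall>z\<in>Zof (suppC C) W. reduced z"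
    using assms by (auto simp: Zof_def fs_def fmul_reduced)
  have zero: "opT C f (i, z) = 0" if "z \<notin> Zof (suppC C) W" for i z
  proof (cases "reduced z")
    case False then show ?thesis by (simp add: opT_apply)
  next
    case True
    have "f (j, fmul (winv x) z) = 0" if "x \<in> suppC C" for x j
    proof (rule ccontr)
      assume "f (j, fmul (winv x) z) \<noteq> 0"
      then have "fmul (winv x) z \<in> W" using assms(2) by (auto simp: fs_def)
      moreover have "z = fmul x (fmul (winv x) z)" using fmul_inv_right[OF True] by simp
      ultimately have "z \<in> Zof (suppC C) W" using that by (force simp: Zof_def)
      then show False using \<open>z \<notin> _\<close> by simp
    qed
    then show ?thesis by (simp add: opT_apply)
  qed
  show ?thesis using fin red zero by (simp add: fs_def)
qed

lemma suppC_adjC: "suppC (adjC C) = winv ` suppC C"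
proof -
  have "adjC C y \<noteq> (\<lambda>i j. 0) \<longleftrightarrow> C (winv y) \<noteq> (\<lambda>i j. 0)" for y
    by (auto simp: adjC_def fun_eq_iff)
  then have "suppC (adjC C) = {y. winv y \<in> suppC C}" by (auto simp: suppC_def)
  also have "\<dots> = winv ` suppC C" by (auto simp: image_iff) (metis winv_winv)
  finally show ?thesis .
qed

lemma opT_adj_bdelta:
  assumes "in_MnLK C"
  shows "opT (adjC C) (bdelta c) (i, z) =
    (if z \<in> winv ` suppC C then (\<Sum>k\<in>UNIV. cnj (C (winv z) k i) * c k) else 0)"
proof -
  have redS: "reduced y" if "y \<in> winv ` suppC C" for y
    using that inMnLK_D[OF assms] by (auto intro: reduced_winv Kset_reduced)
  show ?thesis
  proof (cases "reduced z")
    case False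
    then show ?thesis using redS by (auto simp: opT_apply)
  next
    case True
    have "bdelta c (k, fmul (winv y) z) = (if z = y then c k else 0)"
      if "y \<in> winv ` suppC C" for y k
      using fmul_winv_eq_Nil[OF redS[OF that] True] fmul_winv_self[OF redS[OF that]]
      by (auto simp: bdelta_def)
    note bd = this
    have "opT (adjC C) (bdelta c) (i, z) =
       (\<Sum>y\<in>winv ` suppC C. \<Sum>k\<in>UNIV. adjC C y i k * bdelta c (k, fmul (winv y) z))"
      using True by (simp add: opT_apply suppC_adjC)
    also have "\<dots> = (\<Sum>y\<in>winv ` suppC C. if z = y then (\<Sum>k\<in>UNIV. cnj (C (winv y) k i) * c k) else 0)"
      by (rule sum.cong) (auto simp: adjC_def bd)
    also have "\<dots> = (if z \<in> winv ` suppC C then (\<Sum>k\<in>UNIV. cnj (C (winv z) k i) * c k) else 0)"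
      using inMnLK_D[OF assms] by (simp add: sum.delta)
    finally show ?thesis .
  qed
qed

definition Hb :: "(word \<Rightarrow> 'n::finite \<Rightarrow> 'n \<Rightarrow> complex) \<Rightarrow> ('n \<Rightarrow> complex) \<Rightarrow> real" where
  "Hb C c = (\<Sum>x\<in>suppC C. \<Sum>i\<in>UNIV. (cmod (\<Sum>k\<in>UNIV. cnj (C x k i) * c k))\<^sup>2)"

lemma nsq_adj_bdelta:
  assumes "in_MnLK C"
  shows "nsq (opT (adjC C) (bdelta c)) = Hb C c"
proof -
  have fin: "finite (suppC C)" using inMnLK_D[OF assms] by simp
  have redS: "reduced y" if "y \<in> winv ` suppC C" for y
    using that inMnLK_D[OF assms] by (auto intro: reduced_winv Kset_reduced)
  have "fs (winv ` suppC C) (opT (adjC C) (bdelta c))"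
    using fin redS by (auto simp: fs_def opT_adj_bdelta[OF assms])
  then have "nsq (opT (adjC C) (bdelta c)) = (\<Sum>y\<in>winv ` suppC C. hW (opT (adjC C) (bdelta c)) y)"
    by (rule nsq_fs)
  also have "\<dots> = (\<Sum>x\<in>suppC C. hW (opT (adjC C) (bdelta c)) (winv x))"
    by (subst sum.reindex) (auto simp: inj_on_def intro: winv_inj)
  also have "\<dots> = Hb C c"
    unfolding Hb_def hW_def by (auto simp: opT_adj_bdelta[OF assms] intro!: sum.cong)
  finally show ?thesis .
qed

lemma vnorm_sq: "(vnorm c)\<^sup>2 = (\<Sum>k\<in>UNIV. (cmod (c k))\<^sup>2)"
  by (simp add: vnorm_def sum_nonneg)

lemma vnorm_nonneg: "0 \<le> vnorm c"
  by (simp add: vnorm_def sum_nonneg)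

lemma vnorm_scale: "vnorm (\<lambda>k. r * c k) = cmod r * vnorm c"
  by (simp add: vnorm_def norm_mult power_mult_distrib sum_distrib_left[symmetric] real_sqrt_mult)

lemma vnorm_zero: "vnorm c = 0 \<Longrightarrow> c = (\<lambda>k. 0)"
proof -
  assume "vnorm c = 0"
  then have "(\<Sum>k\<in>UNIV. (cmod (c k))\<^sup>2) = 0" using vnorm_sq[of c] by simp
  then have "\<forall>k\<in>UNIV. (cmod (c k))\<^sup>2 = 0" by (subst (asm) sum_nonneg_eq_0_iff) auto
  then show ?thesis by auto
qed

lemma Hb_scale: "Hb C (\<lambda>k. r * c k) = (cmod r)\<^sup>2 * Hb C c"
proof -
  have "(\<Sum>k\<in>UNIV. cnj (C x k i) * (r * c k)) = r * (\<Sum>k\<in>UNIV. cnj (C x k i) * c k)" for x i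
    by (simp add: sum_distrib_left algebra_simps)
  note e = this
  have "Hb C (\<lambda>k. r * c k) = (\<Sum>x\<in>suppC C. \<Sum>i\<in>UNIV. (cmod (r * (\<Sum>k\<in>UNIV. cnj (C x k i) * c k)))\<^sup>2)"
    by (simp only: Hb_def e)
  also have "\<dots> = (\<Sum>x\<in>suppC C. \<Sum>i\<in>UNIV. (cmod r)\<^sup>2 * (cmod (\<Sum>k\<in>UNIV. cnj (C x k i) * c k))\<^sup>2)"
    by (simp only: norm_mult power_mult_distrib)
  also have "\<dots> = (cmod r)\<^sup>2 * Hb C c"
    by (simp only: Hb_def sum_distrib_left)
  finally show ?thesis .
qed

lemma Hb_bound:
  "Hb C c \<le> (\<Sum>x\<in>suppC C. \<Sum>i\<in>UNIV. \<Sum>k\<in>UNIV. (cmod (C x k i))\<^sup>2) * (vnorm c)\<^sup>2"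
proof -
  have "(cmod (\<Sum>k\<in>UNIV. cnj (C x k i) * c k))\<^sup>2 \<le> (\<Sum>k\<in>UNIV. (cmod (C x k i))\<^sup>2) * (vnorm c)\<^sup>2" for x i
    using CS_complex[of "\<lambda>k. cnj (C x k i)" c UNIV] by (simp add: vnorm_sq)
  then show ?thesis
    unfolding Hb_def by (simp add: sum_distrib_right sum_mono)
qed

lemma Hb_nonneg: "0 \<le> Hb C c"
  by (simp add: Hb_def sum_nonneg)

lemma bT_bdd:
  assumes "in_MnLK C"
  shows "bdd_above ((\<lambda>b. l2norm (opT (adjC C) (bdelta b))) ` {b. vnorm b \<le> 1})"
proof -
  let ?M = "(\<Sum>x\<in>suppC C. \<Sum>i\<in>UNIV. \<Sum>k\<in>UNIV. (cmod (C x k i))\<^sup>2)"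
  have M0: "0 \<le> ?M" by (simp add: sum_nonneg)
  have "l2norm (opT (adjC C) (bdelta b)) \<le> sqrt ?M" if "vnorm b \<le> 1" for b
  proof -
    have "(vnorm b)\<^sup>2 \<le> 1" using that vnorm_nonneg[of b] by (simp add: power_le_one)
    then have "Hb C b \<le> ?M" using Hb_bound[of C b] M0
      by (meson mult_left_le order_trans)
    then show ?thesis by (simp add: l2norm_nsq nsq_adj_bdelta[OF assms])
  qed
  then show ?thesis by (intro bdd_aboveI2[where M="sqrt ?M"]) auto
qed

lemma bT_nonneg:
  assumes "in_MnLK C"
  shows "0 \<le> bT C"
proof -
  have "l2norm (opT (adjC C) (bdelta (\<lambda>k. 0))) \<le> bT C"
    unfolding bT_def by (rule cSUP_upper[OF _ bT_bdd[OF assms]]) (simp add: vnorm_def)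
  moreover have "l2norm (opT (adjC C) (bdelta (\<lambda>k. 0))) = 0"
    by (simp add: l2norm_nsq nsq_adj_bdelta[OF assms] Hb_def)
  ultimately show ?thesis by simp
qed

lemma Hb_le_bT:
  assumes "in_MnLK C"
  shows "Hb C c \<le> (bT C)\<^sup>2 * (vnorm c)\<^sup>2"
proof (cases "vnorm c = 0")
  case True
  then show ?thesis using vnorm_zero[OF True] by (simp add: Hb_def)
next
  case False
  then have vp: "0 < vnorm c" using vnorm_nonneg[of c] by simp
  define c' where "c' = (\<lambda>k. complex_of_real (1 / vnorm c) * c k)"
  have "vnorm c' = cmod (complex_of_real (1 / vnorm c)) * vnorm c"
    unfolding c'_def by (rule vnorm_scale)
  also have "\<dots> = 1" using vp by (simp add: norm_divide)
  finally have "vnorm c' = 1" .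
  then have "l2norm (opT (adjC C) (bdelta c')) \<le> bT C"
    unfolding bT_def by (intro cSUP_upper[OF _ bT_bdd[OF assms]]) simp
  then have "sqrt (Hb C c') \<le> bT C" by (simp add: l2norm_nsq nsq_adj_bdelta[OF assms])
  then have "Hb C c' \<le> (bT C)\<^sup>2" using Hb_nonneg[of C c'] bT_nonneg[OF assms]
    by (metis real_le_rsqrt real_sqrt_le_iff sqrt_le_D)
  moreover have "Hb C c' = (cmod (complex_of_real (1 / vnorm c)))\<^sup>2 * Hb C c"
    unfolding c'_def by (rule Hb_scale)
  then have "Hb C c' = Hb C c / (vnorm c)\<^sup>2"
    using vp by (simp add: power_divide norm_divide)
  ultimately have "Hb C c / (vnorm c)\<^sup>2 \<le> (bT C)\<^sup>2" by simp
  then show ?thesis using vp by (simp add: divide_le_eq mult.commute)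
qed

lemma RB:
  fixes C :: "word \<Rightarrow> 'n::finite \<Rightarrow> 'n \<Rightarrow> complex"
  assumes "in_MnLK C"
  shows "(\<Sum>i\<in>UNIV. (cmod (\<Sum>x\<in>suppC C. \<Sum>j\<in>UNIV. C x i j * g x j))\<^sup>2)
         \<le> (bT C)\<^sup>2 * (\<Sum>x\<in>suppC C. \<Sum>j\<in>UNIV. (cmod (g x j))\<^sup>2)"
proof -
  define S where "S = suppC C"
  have finS: "finite S" using inMnLK_D[OF assms] by (simp add: S_def)
  define y where "y i = (\<Sum>x\<in>S. \<Sum>j\<in>UNIV. C x i j * g x j)" for i
  define Y where "Y = (\<Sum>i\<in>UNIV. (cmod (y i))\<^sup>2)"
  define G where "G = (\<Sum>x\<in>S. \<Sum>j\<in>UNIV. (cmod (g x j))\<^sup>2)"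
  define u where "u x j = (\<Sum>i\<in>UNIV. cnj (y i) * C x i j)" for x j
  have Y0: "0 \<le> Y" by (simp add: Y_def sum_nonneg)
  have G0: "0 \<le> G" by (simp add: G_def sum_nonneg)
  have "complex_of_real Y = (\<Sum>i\<in>UNIV. cnj (y i) * y i)"
    unfolding Y_def of_real_sum
    by (rule sum.cong[OF refl], subst complex_norm_square, rule mult.commute)
  also have "\<dots> = (\<Sum>i\<in>UNIV. \<Sum>x\<in>S. \<Sum>j\<in>UNIV. cnj (y i) * (C x i j * g x j))"
    by (simp add: y_def sum_distrib_left)
  also have "\<dots> = (\<Sum>x\<in>S. \<Sum>i\<in>UNIV. \<Sum>j\<in>UNIV. cnj (y i) * (C x i j * g x j))"
    by (rule sum.swap)
  also have "\<dots> = (\<Sum>x\<in>S. \<Sum>j\<in>UNIV. \<Sum>i\<in>UNIV. cnj (y i) * (C x i j * g x j))"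
    by (rule sum.cong[OF refl], rule sum.swap)
  also have "\<dots> = (\<Sum>x\<in>S. \<Sum>j\<in>UNIV. u x j * g x j)"
    by (simp add: u_def sum_distrib_right mult.assoc)
  also have "\<dots> = (\<Sum>p\<in>S \<times> UNIV. u (fst p) (snd p) * g (fst p) (snd p))"
    by (simp add: sum.cartesian_product split_def)
  finally have Yc: "complex_of_real Y = (\<Sum>p\<in>S \<times> UNIV. u (fst p) (snd p) * g (fst p) (snd p))" .
  have "Y\<^sup>2 = (cmod (complex_of_real Y))\<^sup>2" using Y0 by simp
  also have "\<dots> \<le> (\<Sum>p\<in>S \<times> UNIV. (cmod (u (fst p) (snd p)))\<^sup>2) * (\<Sum>p\<in>S \<times> UNIV. (cmod (g (fst p) (snd p)))\<^sup>2)"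
    unfolding Yc by (rule CS_complex)
  also have "(\<Sum>p\<in>S \<times> UNIV. (cmod (g (fst p) (snd p)))\<^sup>2) = G"
    by (simp add: G_def sum.cartesian_product split_def)
  also have "(\<Sum>p\<in>S \<times> UNIV. (cmod (u (fst p) (snd p)))\<^sup>2) = Hb C y"
  proof -
    have "cmod (u x j) = cmod (\<Sum>k\<in>UNIV. cnj (C x k j) * y k)" for x j
    proof -
      have "cmod (u x j) = cmod (cnj (u x j))" by simp
      also have "cnj (u x j) = (\<Sum>k\<in>UNIV. cnj (C x k j) * y k)"
        by (simp add: u_def mult.commute)
      finally show ?thesis .
    qed
    then show ?thesis by (simp add: Hb_def S_def sum.cartesian_product split_def)
  qed
  also have "Hb C y \<le> (bT C)\<^sup>2 * Y"
    using Hb_le_bT[OF assms, of y] by (simp add: vnorm_sq Y_def)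
  finally have "Y\<^sup>2 \<le> (bT C)\<^sup>2 * Y * G"
    using G0 by (simp add: mult_right_mono)
  then have "Y \<le> (bT C)\<^sup>2 * G"
  proof (cases "Y = 0")
    case True then show ?thesis using G0 by simp
  next
    case False
    then have "0 < Y" using Y0 by simp
    moreover assume "Y\<^sup>2 \<le> (bT C)\<^sup>2 * Y * G"
    ultimately show ?thesis by (simp add: power2_eq_square mult.assoc mult.left_commute)
  qed
  then show ?thesis by (simp add: Y_def G_def y_def S_def)
qed

lemma sum_inj_le:
  fixes h :: "'b \<Rightarrow> real"
  assumes "finite P" "inj_on \<phi> P" "finite W" "\<And>w. w \<notin> W \<Longrightarrow> h w = 0" "\<And>w. 0 \<le> h w"
  shows "(\<Sum>p\<in>P. h (\<phi> p)) \<le> (\<Sum>w\<in>W. h w)"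
proof -
  have "(\<Sum>p\<in>P. h (\<phi> p)) = (\<Sum>w\<in>\<phi> ` P. h w)"
    using assms(2) by (simp add: sum.reindex)
  also have "\<dots> \<le> (\<Sum>w\<in>\<phi> ` P \<union> W. h w)"
    by (rule sum_mono2) (use assms in auto)
  also have "\<dots> = (\<Sum>w\<in>W. h w)"
    by (rule sum.mono_neutral_right) (use assms in auto)
  finally show ?thesis .
qed

lemma Tsel_bound:
  fixes C :: "word \<Rightarrow> 'n::finite \<Rightarrow> 'n \<Rightarrow> complex"
  assumes "in_MnLK C"
  shows "(\<Sum>z\<in>Z. \<Sum>i\<in>UNIV. (cmod (\<Sum>x\<in>suppC C. \<Sum>j\<in>UNIV.
            (if sel x z then C x i j * f (j, fmul (winv x) z) else 0)))\<^sup>2)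
       \<le> (bT C)\<^sup>2 * (\<Sum>z\<in>Z. \<Sum>x\<in>suppC C. (if sel x z then hW f (fmul (winv x) z) else 0))"
proof -
  have "(\<Sum>i\<in>UNIV. (cmod (\<Sum>x\<in>suppC C. \<Sum>j\<in>UNIV.
            (if sel x z then C x i j * f (j, fmul (winv x) z) else 0)))\<^sup>2)
       \<le> (bT C)\<^sup>2 * (\<Sum>x\<in>suppC C. (if sel x z then hW f (fmul (winv x) z) else 0))" for z
  proof -
    define g where "g x j = (if sel x z then f (j, fmul (winv x) z) else 0)" for x j
    have "(\<Sum>i\<in>UNIV. (cmod (\<Sum>x\<in>suppC C. \<Sum>j\<in>UNIV.
            (if sel x z then C x i j * f (j, fmul (winv x) z) else 0)))\<^sup>2)
        = (\<Sum>i\<in>UNIV. (cmod (\<Sum>x\<in>suppC C. \<Sum>j\<in>UNIV. C x i j * g x j))\<^sup>2)"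
    proof -
      have "C x i j * g x j = (if sel x z then C x i j * f (j, fmul (winv x) z) else 0)" for x i j
        by (simp add: g_def)
      then show ?thesis by simp
    qed
    also have "\<dots> \<le> (bT C)\<^sup>2 * (\<Sum>x\<in>suppC C. \<Sum>j\<in>UNIV. (cmod (g x j))\<^sup>2)"
      by (rule RB[OF assms])
    also have "(\<Sum>x\<in>suppC C. \<Sum>j\<in>UNIV. (cmod (g x j))\<^sup>2)
             = (\<Sum>x\<in>suppC C. (if sel x z then hW f (fmul (winv x) z) else 0))"
      by (rule sum.cong) (auto simp: g_def hW_def)
    finally show ?thesis .
  qed
  then show ?thesis by (simp add: sum_distrib_left sum_mono)
qed

definition pre :: "word \<Rightarrow> word \<Rightarrow> bool" where
  "pre x w \<longleftrightarrow> (\<exists>r. w = winv x @ r)"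

abbreviation isa :: "letter \<Rightarrow> bool" where
  "isa a \<equiv> isl (fst a)"

definition tailok :: "word \<Rightarrow> bool" where
  "tailok t \<longleftrightarrow> t = [] \<or> \<not> isa (hd t)"

lemma ta_append:
  assumes "alpha u" "tailok t"
  shows "takeWhile isa (u @ t) = u" "dropWhile isa (u @ t) = t"
proof -
  have tw: "takeWhile isa t = []" "dropWhile isa t = t"
    using assms(2) by (cases t; simp add: tailok_def)+
  have "\<And>x. x \<in> set u \<Longrightarrow> isa x" using assms(1) by (simp add: alpha_def)
  then show "takeWhile isa (u @ t) = u" "dropWhile isa (u @ t) = t"
    by (simp_all add: takeWhile_append2 dropWhile_append2 tw)
qed

lemma alpha_ta: "alpha (takeWhile isa w)"
  by (auto simp: alpha_def dest: set_takeWhileD)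

lemma tailok_td: "tailok (dropWhile isa w)"
  unfolding tailok_def using hd_dropWhile by blast

lemma winv_K:
  "winv ((Inr j, True) # v) = winv v @ [(Inr j, False)]"
  by (simp add: winv_Cons linv_def)

lemma pre_unique:
  assumes "x1 \<in> Kset" "x2 \<in> Kset" "pre x1 w" "pre x2 w"
  shows "x1 = x2"
proof -
  obtain j1 v1 where x1: "x1 = (Inr j1, True) # v1" "v1 \<in> Falpha" using Kset_cases[OF assms(1)] by blast
  obtain j2 v2 where x2: "x2 = (Inr j2, True) # v2" "v2 \<in> Falpha" using Kset_cases[OF assms(2)] by blast
  obtain r1 where r1: "w = winv v1 @ (Inr j1, False) # r1"
    using assms(3) x1 by (auto simp: pre_def winv_K)
  obtain r2 where r2: "w = winv v2 @ (Inr j2, False) # r2"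
    using assms(4) x2 by (auto simp: pre_def winv_K)
  have a1: "alpha (winv v1)" "alpha (winv v2)" using x1 x2 by (auto simp: Falpha_iff winv_alpha)
  have t: "tailok ((Inr j1, False) # r1)" "tailok ((Inr j2, False) # r2)" by (auto simp: tailok_def)
  have "winv v1 = winv v2" using ta_append(1)[OF a1(1) t(1)] ta_append(1)[OF a1(2) t(2)] r1 r2 by simp
  moreover have "(Inr j1, False) # r1 = (Inr j2, False) # r2"
    using ta_append(2)[OF a1(1) t(1)] ta_append(2)[OF a1(2) t(2)] r1 r2 by simp
  ultimately show ?thesis using x1 x2 winv_inj by auto
qed

lemma T2_reindex:
  fixes f :: "'n::finite \<times> word \<Rightarrow> complex"
  assumes "in_MnLK C" "fs W f" "finite Z" "\<forall>z\<in>Z. reduced z"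
  shows "(\<Sum>z\<in>Z. \<Sum>x\<in>suppC C. (if pre x (fmul (winv x) z) then hW f (fmul (winv x) z) else 0))
         \<le> (\<Sum>w\<in>W. hW f w)"
proof -
  define S where "S = suppC C"
  have finS: "finite S" and SK: "S \<subseteq> Kset" using inMnLK_D[OF assms(1)] by (auto simp: S_def)
  define \<phi> where "\<phi> p = fmul (winv (snd p)) (fst p)" for p :: "word \<times> word"
  define P where "P = {p \<in> Z \<times> S. pre (snd p) (\<phi> p)}"
  have "(\<Sum>z\<in>Z. \<Sum>x\<in>S. (if pre x (fmul (winv x) z) then hW f (fmul (winv x) z) else 0))
      = (\<Sum>p\<in>Z \<times> S. (if pre (snd p) (\<phi> p) then hW f (\<phi> p) else 0))"
    unfolding \<phi>_def by (simp add: sum.cartesian_product split_def)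
  also have "\<dots> = (\<Sum>p\<in>P. hW f (\<phi> p))"
    unfolding P_def using assms(3) finS by (simp add: sum.inter_filter)
  also have "\<dots> \<le> (\<Sum>w\<in>W. hW f w)"
  proof (rule sum_inj_le)
    show "finite P" using assms(3) finS by (simp add: P_def)
    show "inj_on \<phi> P"
    proof (rule inj_onI)
      fix p q assume p: "p \<in> P" and q: "q \<in> P" and e: "\<phi> p = \<phi> q"
      have "snd p = snd q"
      proof (rule pre_unique)
        show "snd p \<in> Kset" "snd q \<in> Kset" using p q SK by (auto simp: P_def)
        show "pre (snd p) (\<phi> p)" "pre (snd q) (\<phi> p)" using p q e by (auto simp: P_def)
      qed
      moreover have "fst p = fmul (snd p) (\<phi> p)" "fst q = fmul (snd q) (\<phi> q)"
        using p q assms(4) by (auto simp: P_def \<phi>_def fmul_inv_right)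
      ultimately show "p = q" using e by (simp add: prod_eq_iff)
    qed
    show "finite W" using assms(2) by (simp add: fs_def)
    show "hW f w = 0" if "w \<notin> W" for w using assms(2) that by (simp add: fs_def hW_def)
    show "0 \<le> hW f w" for w by (rule hW_nonneg)
  qed
  finally show ?thesis by (simp add: S_def)
qed

lemma crude_reindex:
  fixes f :: "'n::finite \<times> word \<Rightarrow> complex"
  assumes "in_MnLK C" "fs W f" "finite Z" "\<forall>z\<in>Z. reduced z"
  shows "(\<Sum>z\<in>Z. \<Sum>x\<in>suppC C. (if True then hW f (fmul (winv x) z) else 0))
         \<le> real (card (suppC C)) * (\<Sum>w\<in>W. hW f w)"
proof -
  have "(\<Sum>z\<in>Z. \<Sum>x\<in>suppC C. (if True then hW f (fmul (winv x) z) else 0))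
      = (\<Sum>x\<in>suppC C. \<Sum>z\<in>Z. hW f (fmul (winv x) z))"
    by (simp add: sum.swap[of _ Z])
  also have "\<dots> \<le> (\<Sum>x\<in>suppC C. (\<Sum>w\<in>W. hW f w))"
  proof (rule sum_mono)
    fix x
    show "(\<Sum>z\<in>Z. hW f (fmul (winv x) z)) \<le> (\<Sum>w\<in>W. hW f w)"
    proof (rule sum_inj_le)
      show "inj_on (fmul (winv x)) Z"
        using assms(4) by (metis fmul_inv_right inj_onI)
      show "hW f w = 0" if "w \<notin> W" for w using assms(2) that by (simp add: fs_def hW_def)
    qed (use assms hW_nonneg in \<open>auto simp: fs_def\<close>)
  qed
  also have "\<dots> = real (card (suppC C)) * (\<Sum>w\<in>W. hW f w)" by simp
  finally show ?thesis .
qed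

lemma crude_bound:
  fixes f :: "'n::finite \<times> word \<Rightarrow> complex"
  assumes "in_MnLK C" "fs W f"
  shows "nsq (opT C f) \<le> (bT C)\<^sup>2 * real (card (suppC C)) * nsq f"
proof -
  define Z where "Z = Zof (suppC C) W"
  have fsT: "fs Z (opT C f)" using opT_fs[OF assms] by (simp add: Z_def)
  then have finZ: "finite Z" and redZ: "\<forall>z\<in>Z. reduced z" by (auto simp: fs_def)
  have "nsq (opT C f) = (\<Sum>z\<in>Z. hW (opT C f) z)" by (rule nsq_fs[OF fsT])
  also have "\<dots> = (\<Sum>z\<in>Z. \<Sum>i\<in>UNIV. (cmod (\<Sum>x\<in>suppC C. \<Sum>j\<in>UNIV.
            (if True then C x i j * f (j, fmul (winv x) z) else 0)))\<^sup>2)"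
    using redZ by (auto simp: hW_def opT_apply intro!: sum.cong)
  also have "\<dots> \<le> (bT C)\<^sup>2 * (\<Sum>z\<in>Z. \<Sum>x\<in>suppC C. (if True then hW f (fmul (winv x) z) else 0))"
    by (rule Tsel_bound[OF assms(1)])
  also have "\<dots> \<le> (bT C)\<^sup>2 * (real (card (suppC C)) * (\<Sum>w\<in>W. hW f w))"
    by (rule mult_left_mono[OF crude_reindex[OF assms finZ redZ]]) simp
  also have "\<dots> = (bT C)\<^sup>2 * real (card (suppC C)) * nsq f"
    by (simp add: nsq_fs[OF assms(2)])
  finally show ?thesis .
qed

lemma L2alpha_fs:
  assumes "q \<in> L2alpha"
  shows "fs (snd ` {p. q p \<noteq> 0}) q"
proof -
  have fin: "finite {p. q p \<noteq> 0}" using assms by (simp add: L2alpha_def)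
  have "reduced w" if "w \<in> snd ` {p. q p \<noteq> 0}" for w
    using that assms by (auto simp: L2alpha_def Falpha_def)
  moreover have "q (j, w) = 0" if "w \<notin> snd ` {p. q p \<noteq> 0}" for j w
    using that by (metis (mono_tags, lifting) image_eqI mem_Collect_eq snd_conv)
  ultimately show ?thesis using fin by (simp add: fs_def)
qed

lemma fs_scale: "fs W f \<Longrightarrow> fs W (\<lambda>p. c * f p)"
  by (simp add: fs_def)

lemma nsq_scale:
  fixes f :: "'n::finite \<times> word \<Rightarrow> complex"
  assumes "fs W f"
  shows "nsq (\<lambda>p. c * f p) = (cmod c)\<^sup>2 * nsq f"
proof -
  have "nsq (\<lambda>p. c * f p) = (\<Sum>w\<in>W. hW (\<lambda>p. c * f p) w)" by (rule nsq_fs[OF fs_scale[OF assms]])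
  also have "\<dots> = (\<Sum>w\<in>W. (cmod c)\<^sup>2 * hW f w)"
    by (simp add: hW_def norm_mult power_mult_distrib sum_distrib_left)
  also have "\<dots> = (cmod c)\<^sup>2 * nsq f" by (simp add: nsq_fs[OF assms] sum_distrib_left)
  finally show ?thesis .
qed

lemma opT_scale: "opT C (\<lambda>p. c * f p) = (\<lambda>p. c * opT C f p)"
proof
  fix p :: "'a \<times> word"
  obtain i z where p: "p = (i, z)" by fastforce
  show "opT C (\<lambda>p. c * f p) p = c * opT C f p"
    unfolding p opT_apply by (simp add: sum_distrib_left algebra_simps)
qed

lemma aT_bdd:
  assumes "in_MnLK C"
  shows "bdd_above ((\<lambda>q. l2norm (opT C q)) ` {q\<in>L2alpha. l2norm q \<le> 1})"
proof -
  let ?M = "(bT C)\<^sup>2 * real (card (suppC C))"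
  have M0: "0 \<le> ?M" by simp
  have "l2norm (opT C q) \<le> sqrt ?M" if "q \<in> L2alpha" "l2norm q \<le> 1" for q
  proof -
    have "nsq q \<le> 1" using that(2) nsq_nonneg[of q] by (simp add: l2norm_nsq)
    then have "nsq (opT C q) \<le> ?M"
      using crude_bound[OF assms L2alpha_fs[OF that(1)]] M0
      by (meson mult_left_le order_trans)
    then show ?thesis by (simp add: l2norm_nsq)
  qed
  then show ?thesis by (intro bdd_aboveI2[where M="sqrt ?M"]) auto
qed

lemma zero_L2alpha: "(\<lambda>p. 0) \<in> L2alpha"
  by (simp add: L2alpha_def)

lemma nsq_zero: "nsq (\<lambda>p. 0) = 0"
  by (simp add: nsq_def)

lemma opT_zero: "opT C (\<lambda>p. 0) = (\<lambda>p. 0)"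
  by (auto simp: fun_eq_iff opT_apply)

lemma aT_nonneg:
  assumes "in_MnLK C"
  shows "0 \<le> aT C"
proof -
  have "l2norm (opT C (\<lambda>p. 0)) \<le> aT C"
    unfolding aT_def by (rule cSUP_upper[OF _ aT_bdd[OF assms]])
      (simp add: zero_L2alpha l2norm_nsq nsq_zero)
  then show ?thesis by (simp add: opT_zero l2norm_nsq nsq_zero)
qed

lemma aT_bound:
  assumes "in_MnLK C" "q \<in> L2alpha"
  shows "nsq (opT C q) \<le> (aT C)\<^sup>2 * nsq q"
proof -
  have fsq: "fs (snd ` {p. q p \<noteq> 0}) q" by (rule L2alpha_fs[OF assms(2)])
  show ?thesis
  proof (cases "nsq q = 0")
    case True
    then have "nsq (opT C q) \<le> 0"
      using crude_bound[OF assms(1) fsq] by simp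
    then show ?thesis using True nsq_nonneg[of "opT C q"] by simp
  next
    case False
    then have np: "0 < nsq q" using nsq_nonneg[of q] by simp
    define c where "c = complex_of_real (1 / sqrt (nsq q))"
    define q' where "q' = (\<lambda>p. c * q p)"
    have q'L: "q' \<in> L2alpha" using assms(2) by (auto simp: q'_def L2alpha_def)
    have cc: "(cmod c)\<^sup>2 = 1 / nsq q" using np by (simp add: c_def power_divide norm_divide)
    have "nsq q' = 1" unfolding q'_def nsq_scale[OF fsq] cc using np by simp
    then have "l2norm (opT C q') \<le> aT C"
      unfolding aT_def using q'L by (intro cSUP_upper[OF _ aT_bdd[OF assms(1)]]) (auto simp: l2norm_nsq)
    then have "nsq (opT C q') \<le> (aT C)\<^sup>2"
      using aT_nonneg[OF assms(1)] nsq_nonneg[of "opT C q'"]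
      by (metis l2norm_nsq real_sqrt_le_iff real_sqrt_unique sqrt_le_D)
    moreover have "nsq (opT C q') = nsq (opT C q) / nsq q"
      unfolding q'_def opT_scale nsq_scale[OF opT_fs[OF assms(1) fsq]] cc by simp
    ultimately show ?thesis using np by (simp add: divide_le_eq mult.commute)
  qed
qed

abbreviation ta :: "word \<Rightarrow> word" where "ta w \<equiv> takeWhile isa w"
abbreviation td :: "word \<Rightarrow> word" where "td w \<equiv> dropWhile isa w"

lemma ta_td: "ta w @ td w = w" by simp

lemma reduced_ta: "reduced w \<Longrightarrow> reduced (ta w)"
  using reduced_append[of "ta w" "td w"] by simp

lemma reduced_td: "reduced w \<Longrightarrow> reduced (td w)"
  using reduced_append[of "ta w" "td w"] by simp

lemma fmul_single: "fmul [a] y = push a y" by (simp add: fmul_def)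

lemma winvK_mul: "fmul (winv ((Inr j, True) # v)) y = fmul (winv v) (push (Inr j, False) y)"
  by (simp add: winv_K fmul_append fmul_single)

lemma push_e_alpha:
  assumes "alpha a"
  shows "push (Inr j, True) a = (Inr j, True) # a"
  using assms by (cases a) (auto simp: cancels_def)

lemma KS:
  assumes "v \<in> Falpha" "reduced w" "\<not> pre ((Inr j, True) # v) w"
  shows "fmul ((Inr j, True) # v) w = (Inr j, True) # (fmul v (ta w) @ td w)"
proof -
  have av: "alpha v" "reduced v" using assms(1) by (auto simp: Falpha_iff)
  define a where "a = fmul v (ta w)"
  have aa: "alpha a" unfolding a_def by (rule fmul_alpha[OF av(1) alpha_ta])
  have "fmul v w = fmul v (ta w @ td w)" by simp
  also have "\<dots> = a @ td w" unfolding a_def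
    by (rule fmul_alpha_append[OF av(1) alpha_ta]) (use tailok_td in \<open>simp add: tailok_def\<close>)
  finally have fw: "fmul v w = a @ td w" .
  have "push (Inr j, True) (a @ td w) = (Inr j, True) # (a @ td w)"
  proof (cases a)
    case (Cons b r)
    then show ?thesis using aa by (cases b) (auto simp: cancels_def)
  next
    case Nil
    show ?thesis
    proof (cases "td w")
      case Nil2: Nil then show ?thesis unfolding Nil Nil2 by simp
    next
      case (Cons c r)
      show ?thesis
      proof (cases "cancels (Inr j, True) c")
        case False then show ?thesis using Nil Cons by simp
      next
        case True
        then have c: "c = (Inr j, False)" by (simp add: cancels_linv linv_def)
        have "ta w = fmul (winv v) (fmul v (ta w))"
          using fmul_inv_left[OF reduced_ta[OF assms(2)]] by simp
        also have "\<dots> = fmul (winv v) []" using Nil by (simp add: a_def)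
        also have "\<dots> = winv v" by (rule fmul_Nil_right[OF reduced_winv[OF av(2)]])
        finally have "ta w = winv v" .
        then have "w = winv v @ (Inr j, False) # r" using Cons c ta_td[of w] by simp
        then have "pre ((Inr j, True) # v) w" by (simp add: pre_def winv_K)
        then show ?thesis using assms(3) by simp
      qed
    qed
  qed
  then show ?thesis by (simp add: fmul_Cons fw a_def)
qed

lemma reduced_append_alpha:
  assumes "alpha a" "reduced a" "reduced y" "y = [] \<or> \<not> isa (hd y)"
  shows "reduced (a @ y)"
proof -
  have "a = [] \<or> y = [] \<or> \<not> cancels (last a) (hd y)"
  proof (cases "a = [] \<or> y = []")
    case False
    then have "isa (last a)" using assms(1) by (simp add: alpha_def)
    then show ?thesis using assms(4) by (auto simp: cancels_def)
  qed auto
  then show ?thesis using assms(2,3)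
    by (auto simp: reduced_def successively_append_iff)
qed

lemma PW:
  fixes f :: "'n::finite \<times> word \<Rightarrow> complex"
  assumes "x \<in> Kset" "reduced ((Inr k, True) # (u' @ t))" "alpha u'" "tailok t"
  shows "(if pre x (fmul (winv x) ((Inr k, True) # (u' @ t))) then 0
            else f (j, fmul (winv x) ((Inr k, True) # (u' @ t))))
       = (if alpha (fmul (winv x) ((Inr k, True) # u'))
            then f (j, fmul (winv x) ((Inr k, True) # u') @ t) else 0)"
proof -
  obtain j0 v where x: "x = (Inr j0, True) # v" "v \<in> Falpha" using Kset_cases[OF assms(1)] by blast
  have av: "alpha v" "reduced v" using x(2) by (auto simp: Falpha_iff)
  have awv: "alpha (winv v)" "reduced (winv v)" using av by (auto intro: winv_alpha reduced_winv)
  have rz: "reduced (u' @ t)" using assms(2) reduced_tl by blast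
  have ru: "reduced u'" using reduced_append[OF rz] by simp
  show ?thesis
  proof (cases "j0 = k")
    case True
    define a where "a = fmul (winv v) u'"
    have aa: "alpha a" unfolding a_def by (rule fmul_alpha[OF awv(1) assms(3)])
    have e1: "fmul (winv x) ((Inr k, True) # (u' @ t)) = a @ t"
      unfolding x winvK_mul True a_def
      using fmul_alpha_append[OF awv(1) assms(3)] assms(4)
      by (simp add: cancels_def tailok_def)
    have e2: "fmul (winv x) ((Inr k, True) # u') = a"
      unfolding x winvK_mul True a_def by (simp add: cancels_def)
    have np: "\<not> pre x (a @ t)"
    proof
      assume "pre x (a @ t)"
      then obtain r where r: "a @ t = winv v @ (Inr k, False) # r"
        using x True by (auto simp: pre_def winv_K)
      have tk: "tailok ((Inr k, False) # r)" by (simp add: tailok_def)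
      have "a = winv v" using ta_append(1)[OF aa assms(4)] ta_append(1)[OF awv(1) tk] r by simp
      moreover have t: "t = (Inr k, False) # r"
        using ta_append(2)[OF aa assms(4)] ta_append(2)[OF awv(1) tk] r by simp
      ultimately have "u' = fmul v (winv v)"
        using fmul_inv_right[OF ru, of v] by (simp add: a_def)
      also have "\<dots> = []" using fmul_winv_self[OF awv(2)] by simp
      finally have "u' = []" .
      then show False using assms(2) t by (simp add: cancels_def)
    qed
    show ?thesis using e1 e2 np aa by simp
  next
    case False
    have push_ne: "push (Inr j0, False) ((Inr k, True) # r) = (Inr j0, False) # (Inr k, True) # r" for r
      using False by (simp add: cancels_def)
    have e0: "fmul (winv v) ([] @ y) = winv v @ y" if "y = [] \<or> \<not> isa (hd y)" for y
      using fmul_alpha_append[OF awv(1), of "[]" y] that fmul_Nil_right[OF awv(2)] by simp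
    have e1: "fmul (winv x) ((Inr k, True) # (u' @ t)) = winv x @ ((Inr k, True) # (u' @ t))"
      unfolding x winvK_mul push_ne using e0[of "(Inr j0, False) # (Inr k, True) # (u' @ t)"]
      by (simp add: winv_K)
    have e2: "fmul (winv x) ((Inr k, True) # u') = winv v @ (Inr j0, False) # (Inr k, True) # u'"
      unfolding x winvK_mul push_ne using e0[of "(Inr j0, False) # (Inr k, True) # u'"] by simp
    have "pre x (fmul (winv x) ((Inr k, True) # (u' @ t)))" unfolding e1 pre_def by blast
    moreover have "\<not> alpha (fmul (winv x) ((Inr k, True) # u'))" unfolding e2 by simp
    ultimately show ?thesis by simp
  qed
qed

definition T1 :: "(word \<Rightarrow> 'n::finite \<Rightarrow> 'n \<Rightarrow> complex) \<Rightarrow> ('n \<times> word \<Rightarrow> complex) \<Rightarrow> 'n \<Rightarrow> word \<Rightarrow> complex" where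
  "T1 C f i z = (\<Sum>x\<in>suppC C. \<Sum>j\<in>UNIV.
      (if pre x (fmul (winv x) z) then 0 else C x i j * f (j, fmul (winv x) z)))"

definition T2 :: "(word \<Rightarrow> 'n::finite \<Rightarrow> 'n \<Rightarrow> complex) \<Rightarrow> ('n \<times> word \<Rightarrow> complex) \<Rightarrow> 'n \<Rightarrow> word \<Rightarrow> complex" where
  "T2 C f i z = (\<Sum>x\<in>suppC C. \<Sum>j\<in>UNIV.
      (if pre x (fmul (winv x) z) then C x i j * f (j, fmul (winv x) z) else 0))"

definition gt :: "('n \<times> word \<Rightarrow> complex) \<Rightarrow> word \<Rightarrow> ('n \<times> word \<Rightarrow> complex)" where
  "gt f t = (\<lambda>(j, u). if alpha u then f (j, u @ t) else 0)"

lemma gt_apply: "gt f t (j, u) = (if alpha u then f (j, u @ t) else 0)"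
  by (simp add: gt_def)

lemma gt_zero:
  assumes "fs W f" "tailok t" "gt f t (j, u) \<noteq> 0"
  shows "u \<in> takeWhile isa ` W" "u \<in> Falpha"
proof -
  have au: "alpha u" using assms(3) by (simp add: gt_apply split: if_splits)
  have fu: "f (j, u @ t) \<noteq> 0" using assms(3) by (simp add: gt_apply split: if_splits)
  have uW: "u @ t \<in> W" using assms(1) fu unfolding fs_def by blast
  have "u = ta (u @ t)" using ta_append(1)[OF au assms(2)] by simp
  then show "u \<in> takeWhile isa ` W" by (rule image_eqI[OF _ uW])
  have "reduced (u @ t)" using uW assms(1) by (simp add: fs_def)
  then have "reduced u" using reduced_append by blast
  then show "u \<in> Falpha" using au by (simp add: Falpha_iff)
qed

lemma gt_fs:
  assumes "fs W f" "tailok t"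
  shows "fs (takeWhile isa ` W) (gt f t)"
proof -
  have "finite (takeWhile isa ` W)" using assms(1) by (simp add: fs_def)
  moreover have "\<forall>w\<in>takeWhile isa ` W. reduced w"
    using assms(1) reduced_ta by (auto simp: fs_def)
  moreover have "\<forall>j u. u \<notin> takeWhile isa ` W \<longrightarrow> gt f t (j, u) = 0"
    using gt_zero(1)[OF assms] by blast
  ultimately show ?thesis by (simp add: fs_def)
qed

lemma gt_L2alpha:
  fixes f :: "'n::finite \<times> word \<Rightarrow> complex"
  assumes "fs W f" "tailok t"
  shows "gt f t \<in> L2alpha"
proof -
  have "{p. gt f t p \<noteq> 0} \<subseteq> UNIV \<times> (takeWhile isa ` W)"
    using gt_zero(1)[OF assms] by auto
  moreover have "finite (UNIV \<times> (takeWhile isa ` W) :: ('n \<times> word) set)"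
    using assms(1) by (simp add: fs_def)
  ultimately have "finite {p. gt f t p \<noteq> 0}" by (rule finite_subset)
  then show ?thesis using gt_zero(2)[OF assms] by (auto simp: L2alpha_def)
qed

lemma T1_PW:
  fixes f :: "'n::finite \<times> word \<Rightarrow> complex"
  assumes "in_MnLK C" "reduced ((Inr k, True) # (u' @ t))" "alpha u'" "tailok t"
  shows "T1 C f i ((Inr k, True) # (u' @ t)) = opT C (gt f t) (i, (Inr k, True) # u')"
proof -
  have rz: "reduced (u' @ t)" using assms(2) reduced_tl by blast
  have ru: "reduced u'" using reduced_append[OF rz] by simp
  have re: "reduced ((Inr k, True) # u')"
    using ru assms(3) by (cases u') (auto simp: cancels_def)
  have SK: "suppC C \<subseteq> Kset" using inMnLK_D[OF assms(1)] by simp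
  have "opT C (gt f t) (i, (Inr k, True) # u') =
     (\<Sum>x\<in>suppC C. \<Sum>j\<in>UNIV. C x i j * gt f t (j, fmul (winv x) ((Inr k, True) # u')))"
    using re by (simp only: opT_apply if_True)
  also have "\<dots> = T1 C f i ((Inr k, True) # (u' @ t))"
    unfolding T1_def
  proof (intro sum.cong refl)
    fix x j assume "x \<in> suppC C"
    then have xK: "x \<in> Kset" using SK by blast
    have "(if pre x (fmul (winv x) ((Inr k, True) # (u' @ t))) then 0
            else C x i j * f (j, fmul (winv x) ((Inr k, True) # (u' @ t))))
        = C x i j * (if pre x (fmul (winv x) ((Inr k, True) # (u' @ t))) then 0
            else f (j, fmul (winv x) ((Inr k, True) # (u' @ t))))" by simp
    also have "\<dots> = C x i j * gt f t (j, fmul (winv x) ((Inr k, True) # u'))"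
      unfolding gt_apply PW[OF xK assms(2-4)] ..
    finally show "C x i j * gt f t (j, fmul (winv x) ((Inr k, True) # u')) =
        (if pre x (fmul (winv x) ((Inr k, True) # (u' @ t))) then 0
            else C x i j * f (j, fmul (winv x) ((Inr k, True) # (u' @ t))))" by simp
  qed
  finally show ?thesis by simp
qed

lemma T1_nonzero_struct:
  fixes f :: "'n::finite \<times> word \<Rightarrow> complex"
  assumes "in_MnLK C" "fs W f" "reduced z" "T1 C f i z \<noteq> 0"
  shows "\<exists>x\<in>suppC C. \<exists>w\<in>W. \<exists>j0 v. x = (Inr j0, True) # v \<and> v \<in> Falpha \<and>
           z = (Inr j0, True) # (fmul v (ta w) @ td w)"
proof -
  obtain x where xS: "x \<in> suppC C" and
    nz: "(\<Sum>j\<in>UNIV. (if pre x (fmul (winv x) z) then 0 else C x i j * f (j, fmul (winv x) z))) \<noteq> 0"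
    using assms(4) unfolding T1_def by (meson sum.neutral)
  have "\<exists>j. (if pre x (fmul (winv x) z) then 0 else C x i j * f (j, fmul (winv x) z)) \<noteq> 0"
  proof (rule ccontr)
    assume "\<not> ?thesis"
    then have "(\<Sum>j\<in>UNIV. (if pre x (fmul (winv x) z) then 0 else C x i j * f (j, fmul (winv x) z))) = 0"
      by (intro sum.neutral) blast
    then show False using nz by simp
  qed
  then obtain j where
    nz2: "(if pre x (fmul (winv x) z) then 0 else C x i j * f (j, fmul (winv x) z)) \<noteq> 0"
    by blast
  define w where "w = fmul (winv x) z"
  have np: "\<not> pre x w" and fw: "f (j, w) \<noteq> 0" using nz2 by (auto simp: w_def split: if_splits)
  have wW: "w \<in> W" using fw assms(2) unfolding fs_def by blast
  have rw: "reduced w" using wW assms(2) by (simp add: fs_def)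
  have xK: "x \<in> Kset" using xS inMnLK_D[OF assms(1)] by blast
  obtain j0 v where x: "x = (Inr j0, True) # v" "v \<in> Falpha" using Kset_cases[OF xK] by blast
  have "z = fmul x w" unfolding w_def using fmul_inv_right[OF assms(3)] by simp
  also have "\<dots> = (Inr j0, True) # (fmul v (ta w) @ td w)"
    unfolding x(1) by (rule KS[OF x(2) rw np[unfolded x(1)]])
  finally show ?thesis using xS wW x by blast
qed

definition psi :: "word \<Rightarrow> word \<times> word" where
  "psi z = (td (tl z), hd z # ta (tl z))"

lemma psi_inv: "z \<noteq> [] \<Longrightarrow> snd (psi z) @ fst (psi z) = z"
  by (cases z) (simp_all add: psi_def)

lemma T1_bound:
  fixes f :: "'n::finite \<times> word \<Rightarrow> complex"
  assumes "in_MnLK C" "fs W f"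
  shows "(\<Sum>z\<in>Zof (suppC C) W. \<Sum>i\<in>UNIV. (cmod (T1 C f i z))\<^sup>2) \<le> (aT C)\<^sup>2 * (\<Sum>w\<in>W. hW f w)"
proof -
  define S where "S = suppC C"
  have finS: "finite S" and SK: "S \<subseteq> Kset" using inMnLK_D[OF assms(1)] by (auto simp: S_def)
  have finW: "finite W" using assms(2) by (simp add: fs_def)
  define Z where "Z = Zof S W"
  have fsT: "fs Z (opT C f)" using opT_fs[OF assms] by (simp add: Z_def S_def)
  then have finZ: "finite Z" and redZ: "\<forall>z\<in>Z. reduced z" by (auto simp: fs_def)
  define Z1 where "Z1 = {z\<in>Z. \<exists>i. T1 C f i z \<noteq> 0}"
  define F where "F z = (\<Sum>i\<in>UNIV. (cmod (T1 C f i z))\<^sup>2)" for z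
  define Tails where "Tails = td ` W"
  define TA where "TA = ta ` W"
  define Zg where "Zg = Zof S TA"
  define H where "H p = hW (opT C (gt f (fst p))) (snd p)" for p
  have H0: "0 \<le> H p" for p by (simp add: H_def hW_nonneg)
  have step1: "(\<Sum>z\<in>Z. F z) = (\<Sum>z\<in>Z1. F z)"
    by (rule sum.mono_neutral_right) (use finZ in \<open>auto simp: Z1_def F_def\<close>)
  have key: "z \<noteq> [] \<and> F z = H (psi z) \<and> psi z \<in> Tails \<times> Zg" if z1: "z \<in> Z1" for z
  proof -
    have zZ: "z \<in> Z" and rz: "reduced z" using that redZ by (auto simp: Z1_def)
    obtain i where "T1 C f i z \<noteq> 0" using z1 by (auto simp: Z1_def)
    from T1_nonzero_struct[OF assms rz this] obtain x w j0 v where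
      xS: "x \<in> suppC C" and wW: "w \<in> W" and x: "x = (Inr j0, True) # v" and vF: "v \<in> Falpha"
      and z: "z = (Inr j0, True) # (fmul v (ta w) @ td w)" by blast
    define a where "a = fmul v (ta w)"
    have aa: "alpha a" unfolding a_def using vF by (simp add: Falpha_iff fmul_alpha alpha_ta)
    have tt: "tailok (td w)" by (rule tailok_td)
    have ps: "psi z = (td w, (Inr j0, True) # a)"
      using ta_append[OF aa tt] by (simp add: psi_def z a_def)
    have rz': "reduced ((Inr j0, True) # (a @ td w))" using rz z by (simp add: a_def)
    have "F z = (\<Sum>i\<in>UNIV. (cmod (opT C (gt f (td w)) (i, (Inr j0, True) # a)))\<^sup>2)"
      unfolding F_def z a_def[symmetric] T1_PW[OF assms(1) rz' aa tt] ..
    also have "\<dots> = H (psi z)" by (simp add: ps H_def hW_def)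
    finally have FH: "F z = H (psi z)" .
    have "(Inr j0, True) # a = fmul x (ta w)"
      by (simp add: x fmul_Cons a_def push_e_alpha[OF aa[unfolded a_def]])
    then have "(Inr j0, True) # a \<in> Zg"
      unfolding Zg_def Zof_def TA_def using xS wW by (force simp: S_def)
    moreover have "td w \<in> Tails" using wW by (simp add: Tails_def)
    ultimately have "psi z \<in> Tails \<times> Zg" by (simp add: ps)
    then show ?thesis using FH z by simp
  qed
  have injpsi: "inj_on psi Z1"
  proof (rule inj_onI)
    fix z1 z2 assume "z1 \<in> Z1" "z2 \<in> Z1" "psi z1 = psi z2"
    then show "z1 = z2" using key psi_inv by metis
  qed
  have finTails: "finite Tails" and finTA: "finite TA" using finW by (simp_all add: Tails_def TA_def)
  have finZg: "finite Zg" using finS finTA by (simp add: Zg_def Zof_def)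
  have tok: "tailok t" if "t \<in> Tails" for t using that tailok_td by (auto simp: Tails_def)
  have fsg: "fs TA (gt f t)" if "t \<in> Tails" for t
    unfolding TA_def by (rule gt_fs[OF assms(2) tok[OF that]])
  have "(\<Sum>z\<in>Z1. F z) = (\<Sum>z\<in>Z1. H (psi z))" using key by simp
  also have "\<dots> = (\<Sum>p\<in>psi ` Z1. H p)" using injpsi by (simp add: sum.reindex)
  also have "\<dots> \<le> (\<Sum>p\<in>Tails \<times> Zg. H p)"
  proof (rule sum_mono2)
    show "psi ` Z1 \<subseteq> Tails \<times> Zg" using key by blast
  qed (use finTails finZg H0 in auto)
  also have "\<dots> = (\<Sum>t\<in>Tails. \<Sum>z'\<in>Zg. hW (opT C (gt f t)) z')"
    by (simp add: H_def sum.cartesian_product split_def)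
  also have "\<dots> \<le> (\<Sum>t\<in>Tails. nsq (opT C (gt f t)))"
    by (rule sum_mono, rule fs_sum_le_nsq[OF opT_fs[OF assms(1) fsg] finZg])
  also have "\<dots> \<le> (\<Sum>t\<in>Tails. (aT C)\<^sup>2 * nsq (gt f t))"
    by (rule sum_mono, rule aT_bound[OF assms(1) gt_L2alpha[OF assms(2) tok]])
  also have "\<dots> = (aT C)\<^sup>2 * (\<Sum>t\<in>Tails. \<Sum>u\<in>TA. hW (gt f t) u)"
    by (simp add: sum_distrib_left nsq_fs[OF fsg])
  also have "(\<Sum>t\<in>Tails. \<Sum>u\<in>TA. hW (gt f t) u) \<le> (\<Sum>w\<in>W. hW f w)"
  proof -
    define P where "P = {p \<in> Tails \<times> TA. alpha (snd p)}"
    define \<phi> where "\<phi> p = snd p @ fst p" for p :: "word \<times> word"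
    have A: "hW (gt f t) u = (if alpha u then hW f (u @ t) else 0)" for t u
      by (simp add: hW_def gt_apply)
    have "(\<Sum>t\<in>Tails. \<Sum>u\<in>TA. hW (gt f t) u)
        = (\<Sum>t\<in>Tails. \<Sum>u\<in>TA. if alpha u then hW f (u @ t) else 0)"
      by (simp only: A)
    also have "\<dots> = (\<Sum>p\<in>Tails \<times> TA. if alpha (snd p) then hW f (\<phi> p) else 0)"
      unfolding \<phi>_def by (simp add: sum.cartesian_product split_def)
    finally have "(\<Sum>t\<in>Tails. \<Sum>u\<in>TA. hW (gt f t) u)
        = (\<Sum>p\<in>Tails \<times> TA. if alpha (snd p) then hW f (\<phi> p) else 0)" .
    also have "\<dots> = (\<Sum>p\<in>P. hW f (\<phi> p))"
      unfolding P_def using finTails finTA by (simp add: sum.inter_filter)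
    also have "\<dots> \<le> (\<Sum>w\<in>W. hW f w)"
    proof (rule sum_inj_le)
      show "finite P" using finTails finTA by (simp add: P_def)
      show "inj_on \<phi> P"
      proof (rule inj_onI)
        fix p q assume p: "p \<in> P" and q: "q \<in> P" and e: "\<phi> p = \<phi> q"
        have ap: "alpha (snd p)" "tailok (fst p)" using p tok by (auto simp: P_def)
        have aq: "alpha (snd q)" "tailok (fst q)" using q tok by (auto simp: P_def)
        have "snd p = snd q" using ta_append(1)[OF ap] ta_append(1)[OF aq] e by (simp add: \<phi>_def)
        moreover have "fst p = fst q" using ta_append(2)[OF ap] ta_append(2)[OF aq] e by (simp add: \<phi>_def)
        ultimately show "p = q" by (simp add: prod_eq_iff)
      qed
      show "hW f w = 0" if "w \<notin> W" for w using assms(2) that by (simp add: fs_def hW_def)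
    qed (use finW hW_nonneg in auto)
    finally show ?thesis .
  qed
  then have "(aT C)\<^sup>2 * (\<Sum>t\<in>Tails. \<Sum>u\<in>TA. hW (gt f t) u) \<le> (aT C)\<^sup>2 * (\<Sum>w\<in>W. hW f w)"
    by (simp add: mult_left_mono)
  finally show ?thesis using step1 by (simp add: F_def Z_def S_def)
qed

lemma ifadd: "(if P then 0 else a) + (if P then a else 0) = (a::complex)"
  by simp

lemma T_split:
  assumes "reduced z"
  shows "opT C f (i, z) = T1 C f i z + T2 C f i z"
proof -
  have "opT C f (i, z) = (\<Sum>x\<in>suppC C. \<Sum>j\<in>UNIV.
      (if pre x (fmul (winv x) z) then 0 else C x i j * f (j, fmul (winv x) z)) +
      (if pre x (fmul (winv x) z) then C x i j * f (j, fmul (winv x) z) else 0))"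
    using assms by (simp only: opT_apply ifadd if_True)
  also have "\<dots> = T1 C f i z + T2 C f i z"
    by (simp add: T1_def T2_def sum.distrib)
  finally show ?thesis .
qed

lemma T2_bound:
  fixes f :: "'n::finite \<times> word \<Rightarrow> complex"
  assumes "in_MnLK C" "fs W f"
  shows "(\<Sum>z\<in>Zof (suppC C) W. \<Sum>i\<in>UNIV. (cmod (T2 C f i z))\<^sup>2) \<le> (bT C)\<^sup>2 * (\<Sum>w\<in>W. hW f w)"
proof -
  define Z where "Z = Zof (suppC C) W"
  have fsT: "fs Z (opT C f)" using opT_fs[OF assms] by (simp add: Z_def)
  then have finZ: "finite Z" and redZ: "\<forall>z\<in>Z. reduced z" by (auto simp: fs_def)
  have "(\<Sum>z\<in>Z. \<Sum>i\<in>UNIV. (cmod (T2 C f i z))\<^sup>2)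
     \<le> (bT C)\<^sup>2 * (\<Sum>z\<in>Z. \<Sum>x\<in>suppC C. (if pre x (fmul (winv x) z) then hW f (fmul (winv x) z) else 0))"
    unfolding T2_def by (rule Tsel_bound[OF assms(1)])
  also have "\<dots> \<le> (bT C)\<^sup>2 * (\<Sum>w\<in>W. hW f w)"
    by (rule mult_left_mono[OF T2_reindex[OF assms finZ redZ]]) simp
  finally show ?thesis by (simp add: Z_def)
qed

lemma finite_bound:
  fixes f :: "'n::finite \<times> word \<Rightarrow> complex"
  assumes "in_MnLK C" "fs W f"
  shows "nsq (opT C f) \<le> (aT C + bT C)\<^sup>2 * nsq f"
proof -
  define Z where "Z = Zof (suppC C) W"
  have fsT: "fs Z (opT C f)" using opT_fs[OF assms] by (simp add: Z_def)
  then have finZ: "finite Z" and redZ: "\<forall>z\<in>Z. reduced z" by (auto simp: fs_def)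
  define A where "A = Z \<times> (UNIV :: 'n set)"
  define N where "N = (\<Sum>w\<in>W. hW f w)"
  have N0: "0 \<le> N" by (simp add: N_def sum_nonneg hW_nonneg)
  have a0: "0 \<le> aT C" by (rule aT_nonneg[OF assms(1)])
  have b0: "0 \<le> bT C" by (rule bT_nonneg[OF assms(1)])
  have L2eq: "L2_set g A = sqrt (\<Sum>z\<in>Z. \<Sum>i\<in>UNIV. (g (z, i))\<^sup>2)" for g
    by (simp add: L2_set_def A_def sum.cartesian_product)
  have "sqrt (nsq (opT C f)) = L2_set (\<lambda>p. cmod (opT C f (snd p, fst p))) A"
    by (simp add: L2eq nsq_fs[OF fsT] hW_def)
  also have "\<dots> \<le> L2_set (\<lambda>p. cmod (T1 C f (snd p) (fst p)) + cmod (T2 C f (snd p) (fst p))) A"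
  proof (rule L2_set_mono)
    fix p assume "p \<in> A"
    then have "reduced (fst p)" using redZ by (auto simp: A_def)
    then show "cmod (opT C f (snd p, fst p)) \<le> cmod (T1 C f (snd p) (fst p)) + cmod (T2 C f (snd p) (fst p))"
      by (simp add: T_split norm_triangle_ineq)
  qed simp
  also have "\<dots> \<le> L2_set (\<lambda>p. cmod (T1 C f (snd p) (fst p))) A + L2_set (\<lambda>p. cmod (T2 C f (snd p) (fst p))) A"
    by (rule L2_set_triangle_ineq)
  also have "\<dots> \<le> sqrt ((aT C)\<^sup>2 * N) + sqrt ((bT C)\<^sup>2 * N)"
  proof (rule add_mono)
    show "L2_set (\<lambda>p. cmod (T1 C f (snd p) (fst p))) A \<le> sqrt ((aT C)\<^sup>2 * N)"
      unfolding L2eq N_def using T1_bound[OF assms] by (simp add: Z_def)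
    show "L2_set (\<lambda>p. cmod (T2 C f (snd p) (fst p))) A \<le> sqrt ((bT C)\<^sup>2 * N)"
      unfolding L2eq N_def using T2_bound[OF assms] by (simp add: Z_def)
  qed
  also have "sqrt ((aT C)\<^sup>2 * N) + sqrt ((bT C)\<^sup>2 * N) = (aT C + bT C) * sqrt N"
    using a0 b0 by (simp add: real_sqrt_mult algebra_simps)
  finally have "sqrt (nsq (opT C f)) \<le> (aT C + bT C) * sqrt N" .
  then have "(sqrt (nsq (opT C f)))\<^sup>2 \<le> ((aT C + bT C) * sqrt N)\<^sup>2"
    by (rule power_mono) (simp add: nsq_nonneg)
  then show ?thesis using N0 nsq_nonneg[of "opT C f"]
    by (simp add: power_mult_distrib nsq_fs[OF assms(2)] N_def)
qed

lemma ell2_sum_le_nsq: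
  assumes "(\<lambda>p. (cmod (f p))\<^sup>2) summable_on UNIV" "finite A"
  shows "(\<Sum>p\<in>A. (cmod (f p))\<^sup>2) \<le> nsq f"
  unfolding nsq_def by (rule finite_sum_le_infsum) (use assms in auto)

lemma general_bound:
  fixes f :: "'n::finite \<times> word \<Rightarrow> complex"
  assumes "in_MnLK C" "f \<in> ell2"
  shows "nsq (opT C f) \<le> (aT C + bT C)\<^sup>2 * nsq f"
proof -
  define M where "M = (aT C + bT C)\<^sup>2 * nsq f"
  define S where "S = suppC C"
  have finS: "finite S" using inMnLK_D[OF assms(1)] by (simp add: S_def)
  have sf: "(\<lambda>p. (cmod (f p))\<^sup>2) summable_on UNIV" using assms(2) by (simp add: ell2_def)
  have fin_bound: "(\<Sum>p\<in>P. (cmod (opT C f p))\<^sup>2) \<le> M" if "finite P" for P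
  proof -
    define WQ where "WQ = (\<lambda>(x, z). fmul (winv x) z) ` (S \<times> {z \<in> snd ` P. reduced z})"
    define fQ where "fQ = (\<lambda>(j, w). if w \<in> WQ then f (j, w) else (0::complex))"
    have finWQ: "finite WQ" using finS that by (simp add: WQ_def)
    have fsQ: "fs WQ fQ"
      using finWQ by (auto simp: fs_def WQ_def fQ_def fmul_reduced)
    have eq: "opT C f p = opT C fQ p" if "p \<in> P" for p
    proof -
      obtain i z where p: "p = (i, z)" by fastforce
      show ?thesis
      proof (cases "reduced z")
        case False then show ?thesis by (simp add: p opT_apply)
      next
        case True
        have "fmul (winv x) z \<in> WQ" if "x \<in> suppC C" for x
          using that True \<open>p \<in> P\<close> p unfolding WQ_def S_def by force
        then show ?thesis by (simp add: p opT_apply fQ_def)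
      qed
    qed
    have "(\<Sum>p\<in>P. (cmod (opT C f p))\<^sup>2) = (\<Sum>p\<in>P. (cmod (opT C fQ p))\<^sup>2)"
      using eq by simp
    also have "\<dots> \<le> nsq (opT C fQ)"
      by (rule ell2_sum_le_nsq[OF fs_summable[OF opT_fs[OF assms(1) fsQ]] that])
    also have "\<dots> \<le> (aT C + bT C)\<^sup>2 * nsq fQ" by (rule finite_bound[OF assms(1) fsQ])
    also have "nsq fQ \<le> nsq f"
    proof -
      have "nsq fQ = (\<Sum>w\<in>WQ. hW fQ w)" by (rule nsq_fs[OF fsQ])
      also have "\<dots> = (\<Sum>w\<in>WQ. hW f w)" by (simp add: hW_def fQ_def)
      also have "\<dots> = (\<Sum>p\<in>UNIV \<times> WQ. (cmod (f p))\<^sup>2)" by (simp add: sum_prod_swap[OF finWQ] hW_def)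
      also have "\<dots> \<le> nsq f" by (rule ell2_sum_le_nsq[OF sf]) (simp add: finWQ)
      finally show ?thesis .
    qed
    then have "(aT C + bT C)\<^sup>2 * nsq fQ \<le> (aT C + bT C)\<^sup>2 * nsq f" by (simp add: mult_left_mono)
    finally show ?thesis by (simp add: M_def)
  qed
  have summ: "(\<lambda>p. (cmod (opT C f p))\<^sup>2) summable_on UNIV"
    by (rule nonneg_bdd_above_summable_on) (use fin_bound in \<open>auto intro!: bdd_aboveI2[where M=M]\<close>)
  have "infsum (\<lambda>p. (cmod (opT C f p))\<^sup>2) UNIV \<le> M"
    by (rule infsum_le_finite_sums[OF summ]) (use fin_bound in auto)
  then show ?thesis by (simp add: nsq_def[of "opT C f"] M_def)
qed

lemma fs_ell2: "fs W (f :: 'n::finite \<times> word \<Rightarrow> complex) \<Longrightarrow> f \<in> ell2"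
  unfolding ell2_def using fs_summable[of W f] by (auto simp: fs_def)

lemma zero_ell2: "(\<lambda>p. 0) \<in> (ell2 :: ('n::finite \<times> word \<Rightarrow> complex) set)"
  by (rule fs_ell2[of "{}"]) (simp add: fs_def)

lemma opnorm_pt:
  fixes C :: "word \<Rightarrow> 'n::finite \<Rightarrow> 'n \<Rightarrow> complex"
  assumes "in_MnLK C" "f \<in> ell2" "l2norm f \<le> 1"
  shows "l2norm (opT C f) \<le> aT C + bT C"
proof -
  have ab: "0 \<le> aT C + bT C" using aT_nonneg[OF assms(1)] bT_nonneg[OF assms(1)] by simp
  have "nsq (opT C f) \<le> (aT C + bT C)\<^sup>2 * nsq f" by (rule general_bound[OF assms(1,2)])
  also have "\<dots> \<le> (aT C + bT C)\<^sup>2"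
  proof -
    have "nsq f \<le> 1" using assms(3) nsq_nonneg[of f] by (simp add: l2norm_nsq)
    then show ?thesis by (simp add: mult_left_le)
  qed
  finally have "nsq (opT C f) \<le> (aT C + bT C)\<^sup>2" .
  then show ?thesis using ab by (simp add: l2norm_nsq real_sqrt_le_iff real_le_lsqrt)
qed

lemma opnorm_bdd:
  fixes C :: "word \<Rightarrow> 'n::finite \<Rightarrow> 'n \<Rightarrow> complex"
  assumes "in_MnLK C"
  shows "bdd_above ((\<lambda>f. l2norm (opT C f)) ` {f\<in>ell2. l2norm f \<le> 1})"
  using opnorm_pt[OF assms] by (intro bdd_aboveI2[where M="aT C + bT C"]) auto

lemma opnorm_upper:
  fixes C :: "word \<Rightarrow> 'n::finite \<Rightarrow> 'n \<Rightarrow> complex"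
  assumes "in_MnLK C"
  shows "opnorm C \<le> aT C + bT C"
  unfolding opnorm_def
proof (rule cSUP_least)
  have "(\<lambda>p. 0) \<in> {f \<in> (ell2 :: ('n \<times> word \<Rightarrow> complex) set). l2norm f \<le> 1}"
    using zero_ell2 by (simp add: l2norm_nsq nsq_zero)
  then show "{f \<in> (ell2 :: ('n \<times> word \<Rightarrow> complex) set). l2norm f \<le> 1} \<noteq> {}" by blast
  show "\<And>f. f \<in> {f \<in> ell2. l2norm f \<le> 1} \<Longrightarrow> l2norm (opT C f) \<le> aT C + bT C"
    using opnorm_pt[OF assms] by blast
qed

lemma opnorm_ge:
  fixes C :: "word \<Rightarrow> 'n::finite \<Rightarrow> 'n \<Rightarrow> complex"
  assumes "in_MnLK C" "f \<in> ell2" "l2norm f \<le> 1"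
  shows "l2norm (opT C f) \<le> opnorm C"
  unfolding opnorm_def by (rule cSUP_upper[OF _ opnorm_bdd[OF assms(1)]]) (use assms in auto)

lemma opnorm_nonneg:
  fixes C :: "word \<Rightarrow> 'n::finite \<Rightarrow> 'n \<Rightarrow> complex"
  assumes "in_MnLK C"
  shows "0 \<le> opnorm C"
  using opnorm_ge[OF assms zero_ell2] by (simp add: opT_zero l2norm_nsq nsq_zero)

lemma opnorm_bound_fs:
  fixes C :: "word \<Rightarrow> 'n::finite \<Rightarrow> 'n \<Rightarrow> complex"
  assumes "in_MnLK C" "fs W g"
  shows "l2norm (opT C g) \<le> opnorm C * l2norm g"
proof (cases "nsq g = 0")
  case True
  have "nsq (opT C g) \<le> 0" using crude_bound[OF assms] True by simp
  then show ?thesis using True nsq_nonneg[of "opT C g"] by (simp add: l2norm_nsq)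
next
  case False
  then have np: "0 < nsq g" using nsq_nonneg[of g] by simp
  define c where "c = complex_of_real (1 / sqrt (nsq g))"
  define g' where "g' = (\<lambda>p. c * g p)"
  have fs': "fs W g'" unfolding g'_def by (rule fs_scale[OF assms(2)])
  have cc: "(cmod c)\<^sup>2 = 1 / nsq g" using np by (simp add: c_def power_divide norm_divide)
  have "nsq g' = 1" unfolding g'_def nsq_scale[OF assms(2)] cc using np by simp
  then have "l2norm (opT C g') \<le> opnorm C"
    using opnorm_ge[OF assms(1) fs_ell2[OF fs']] by (simp add: l2norm_nsq)
  moreover have "nsq (opT C g') = nsq (opT C g) / nsq g"
    unfolding g'_def opT_scale nsq_scale[OF opT_fs[OF assms]] cc by simp
  ultimately have "sqrt (nsq (opT C g) / nsq g) \<le> opnorm C" by (simp add: l2norm_nsq)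
  then have "sqrt (nsq (opT C g)) / sqrt (nsq g) \<le> opnorm C" by (simp add: real_sqrt_divide)
  then show ?thesis using np by (simp add: l2norm_nsq divide_le_eq mult.commute)
qed

lemma aT_le_opnorm:
  fixes C :: "word \<Rightarrow> 'n::finite \<Rightarrow> 'n \<Rightarrow> complex"
  assumes "in_MnLK C"
  shows "aT C \<le> opnorm C"
  unfolding aT_def opnorm_def
proof (rule cSUP_subset_mono)
  have "(\<lambda>p. 0) \<in> {q \<in> (L2alpha :: ('n \<times> word \<Rightarrow> complex) set). l2norm q \<le> 1}"
    using zero_L2alpha by (simp add: l2norm_nsq nsq_zero)
  then show "{q \<in> (L2alpha :: ('n \<times> word \<Rightarrow> complex) set). l2norm q \<le> 1} \<noteq> {}" by blast
  show "bdd_above ((\<lambda>f. l2norm (opT C f)) ` {f \<in> (ell2 :: ('n \<times> word \<Rightarrow> complex) set). l2norm f \<le> 1})" by (rule opnorm_bdd[OF assms])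
  show "{q \<in> (L2alpha :: ('n \<times> word \<Rightarrow> complex) set). l2norm q \<le> 1} \<subseteq> {f \<in> (ell2 :: ('n \<times> word \<Rightarrow> complex) set). l2norm f \<le> 1}"
  proof
    fix q :: "'n \<times> word \<Rightarrow> complex" assume "q \<in> {q \<in> (L2alpha :: ('n \<times> word \<Rightarrow> complex) set). l2norm q \<le> 1}"
    then show "q \<in> {f \<in> (ell2 :: ('n \<times> word \<Rightarrow> complex) set). l2norm f \<le> 1}"
    proof -
      have qL: "q \<in> L2alpha" and q1: "l2norm q \<le> 1" using \<open>q \<in> _\<close> by auto
      have "fs (snd ` {p. q p \<noteq> 0}) q" by (rule L2alpha_fs[OF qL])
      then have "q \<in> ell2" by (rule fs_ell2)
      then show ?thesis using q1 by simp
    qed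
  qed
qed simp

lemma bT_le_opnorm:
  fixes C :: "word \<Rightarrow> 'n::finite \<Rightarrow> 'n \<Rightarrow> complex"
  assumes "in_MnLK C"
  shows "bT C \<le> opnorm C"
  unfolding bT_def
proof (rule cSUP_least)
  have "(\<lambda>k. 0) \<in> {b :: 'n \<Rightarrow> complex. vnorm b \<le> 1}" by (simp add: vnorm_def)
  then show "{b :: 'n \<Rightarrow> complex. vnorm b \<le> 1} \<noteq> {}" by blast
next
  fix b :: "'n \<Rightarrow> complex" assume "b \<in> {b. vnorm b \<le> 1}"
  then have vb: "vnorm b \<le> 1" by simp
  define S where "S = suppC C"
  have finS: "finite S" and SK: "S \<subseteq> Kset" using inMnLK_D[OF assms] by (auto simp: S_def)
  define h where "h = opT (adjC C) (bdelta b)"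
  have fsh: "fs (winv ` S) h"
    using finS SK by (auto simp: fs_def h_def S_def opT_adj_bdelta[OF assms] intro: reduced_winv Kset_reduced)
  define y where "y x j = (\<Sum>k\<in>UNIV. cnj (C x k j) * b k)" for x j
  have hx: "h (j, winv x) = y x j" if "x \<in> S" for x j
    using that by (simp add: h_def opT_adj_bdelta[OF assms] y_def S_def)
  have Th: "opT C h (i, []) = (\<Sum>x\<in>S. \<Sum>j\<in>UNIV. C x i j * y x j)" for i
  proof -
    have "fmul (winv x) [] = winv x" if "x \<in> S" for x
      using that SK by (auto intro: fmul_Nil_right reduced_winv Kset_reduced)
    then show ?thesis by (simp add: opT_apply S_def[symmetric] hx)
  qed
  have "complex_of_real (Hb C b) = (\<Sum>x\<in>S. \<Sum>j\<in>UNIV. cnj (y x j) * y x j)"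
    unfolding Hb_def S_def[symmetric] y_def[symmetric] of_real_sum
    by (intro sum.cong refl, subst complex_norm_square, rule mult.commute)
  also have "\<dots> = (\<Sum>x\<in>S. \<Sum>j\<in>UNIV. \<Sum>i\<in>UNIV. cnj (b i) * (C x i j * y x j))"
  proof (intro sum.cong refl)
    fix x j
    have "cnj (y x j) = (\<Sum>i\<in>UNIV. C x i j * cnj (b i))" by (simp add: y_def)
    then show "cnj (y x j) * y x j = (\<Sum>i\<in>UNIV. cnj (b i) * (C x i j * y x j))"
      by (simp add: sum_distrib_right sum_distrib_left mult_ac)
  qed
  also have "\<dots> = (\<Sum>x\<in>S. \<Sum>i\<in>UNIV. \<Sum>j\<in>UNIV. cnj (b i) * (C x i j * y x j))"
    by (rule sum.cong[OF refl], rule sum.swap)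
  also have "\<dots> = (\<Sum>i\<in>UNIV. \<Sum>x\<in>S. \<Sum>j\<in>UNIV. cnj (b i) * (C x i j * y x j))"
    by (rule sum.swap)
  also have "\<dots> = (\<Sum>i\<in>UNIV. cnj (b i) * opT C h (i, []))"
    by (simp add: Th sum_distrib_left)
  finally have Hc: "complex_of_real (Hb C b) = (\<Sum>i\<in>UNIV. cnj (b i) * opT C h (i, []))" .
  have "Hb C b = cmod (complex_of_real (Hb C b))" using Hb_nonneg[of C b] by simp
  also have "\<dots> \<le> sqrt ((\<Sum>i\<in>UNIV. (cmod (cnj (b i)))\<^sup>2) * (\<Sum>i\<in>UNIV. (cmod (opT C h (i, [])))\<^sup>2))"
    unfolding Hc by (rule real_le_rsqrt, rule CS_complex)
  also have "\<dots> = vnorm b * sqrt (hW (opT C h) [])"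
    by (simp add: vnorm_def hW_def real_sqrt_mult)
  also have "\<dots> \<le> 1 * l2norm (opT C h)"
  proof (rule mult_mono)
    have "hW (opT C h) [] \<le> nsq (opT C h)"
      using fs_sum_le_nsq[OF opT_fs[OF assms fsh], of "{[]}"] by simp
    then show "sqrt (hW (opT C h) []) \<le> l2norm (opT C h)" by (simp add: l2norm_nsq)
  qed (use vb in \<open>auto simp: hW_nonneg\<close>)
  also have "\<dots> \<le> opnorm C * l2norm h" using opnorm_bound_fs[OF assms fsh] by simp
  finally have HH: "Hb C b \<le> opnorm C * l2norm h" .
  have lh: "l2norm h = sqrt (Hb C b)" by (simp add: l2norm_nsq h_def nsq_adj_bdelta[OF assms])
  show "l2norm (opT (adjC C) (bdelta b)) \<le> opnorm C"
  proof (cases "Hb C b = 0")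
    case True then show ?thesis using opnorm_nonneg[OF assms] lh by (simp add: h_def)
  next
    case False
    then have hp: "0 < sqrt (Hb C b)" using Hb_nonneg[of C b] by simp
    have "sqrt (Hb C b) * sqrt (Hb C b) \<le> opnorm C * sqrt (Hb C b)"
      using HH lh Hb_nonneg[of C b] by simp
    then have "sqrt (Hb C b) \<le> opnorm C" by (rule mult_right_le_imp_le[OF _ hp])
    then show ?thesis using lh by (simp add: h_def)
  qed
qed

theorem proposition8:
  fixes C :: "word \<Rightarrow> 'n::finite \<Rightarrow> 'n \<Rightarrow> complex"
  assumes "in_MnLK C"
  shows "max (aT C) (bT C) \<le> opnorm C \<and> opnorm C \<le> aT C + bT C"
  using aT_le_opnorm[OF assms] bT_le_opnorm[OF assms] opnorm_upper[OF assms] by simp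

end
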